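(* Let $\Omega\subset\mathbb{R}^2$ be an open, bounded, sufficiently regular domain with unit outward normal $\bm{n}$ on $\partial\Omega$. Let $\bm{\sigma}_1,\bm{\sigma}_2$ be planar residual stresses on $\Omega$, i.e. symmetric, square-integrable second-order tensor fields on $\Omega$ with $\operatorname{div}\bm{\sigma}_k=\bm{0}$ in $\Omega$ and $\bm{\sigma}_k\bm{n}=\bm{0}$ on $\partial\Omega$ ($k=1,2$). Then $$\int_\Omega \bm{\sigma}_1\cdot\bm{\sigma}_2\,dA=\int_\Omega \bar\sigma_1\,\bar\sigma_2\,dA,$$ where $\bar\sigma_k=\sigma_{k,xx}+\sigma_{k,yy}$ denotes the planar trace of $\bm{\sigma}_k$.
   Context: $\bm{A}\cdot\bm{B}=A_{ij}B_{ij}$ denotes full contraction of second-order tensors; $\operatorname{div}\bm{\sigma}=\sigma_{ij,j}\bm{e}_i$. *)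

theory Defs
  imports "HOL-Analysis.Analysis"
begin

definition full_contraction :: "real^2^2 \<Rightarrow> real^2^2 \<Rightarrow> real" where
  "full_contraction A B = (\<Sum>i\<in>UNIV. \<Sum>j\<in>UNIV. A $ i $ j * B $ i $ j)"

definition planar_trace :: "real^2^2 \<Rightarrow> real" where
  "planar_trace A = (\<Sum>i\<in>UNIV. A $ i $ i)"

text \<open>Admissible test fields: continuously differentiable vector fields on the whole plane
  (restrictions to \<open>\<Omega>\<close> are dense in \<open>H^1(\<Omega>)\<close> for regular \<open>\<Omega>\<close>).
  \<open>Dv x\<close> is the derivative at \<open>x\<close>; \<open>\<partial>_j v_i = Dv x (axis j 1) $ i\<close>.\<close>

definition C1_field :: "(real^2 \<Rightarrow> real^2) \<Rightarrow> (real^2 \<Rightarrow> real^2 \<Rightarrow> real^2) \<Rightarrow> bool" where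
  "C1_field v Dv \<longleftrightarrow> (\<forall>x. (v has_derivative Dv x) (at x)) \<and>
     (\<forall>i j. continuous_on UNIV (\<lambda>x. Dv x (axis j 1) $ i))"

text \<open>Residual stress on \<open>\<Omega>\<close>: symmetric, square-integrable, and in equilibrium with zero
  tractions, in the weak sense: \<open>\<integral>\<^sub>\<Omega> \<sigma> \<cdot> \<nabla>v dA = 0\<close> for all test fields \<open>v\<close> (this
  encodes both \<open>div \<sigma> = 0\<close> in \<open>\<Omega>\<close> and \<open>\<sigma> n = 0\<close> on \<open>\<partial>\<Omega>\<close>).\<close>

definition residual_stress :: "(real^2) set \<Rightarrow> (real^2 \<Rightarrow> real^2^2) \<Rightarrow> bool" where
  "residual_stress \<Omega> \<sigma> \<longleftrightarrow>
     (\<forall>x\<in>\<Omega>. transpose (\<sigma> x) = \<sigma> x) \<and>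
     (\<forall>i j. set_borel_measurable lebesgue \<Omega> (\<lambda>x. \<sigma> x $ i $ j) \<and>
            set_integrable lebesgue \<Omega> (\<lambda>x. (\<sigma> x $ i $ j)\<^sup>2)) \<and>
     (\<forall>v Dv. C1_field v Dv \<longrightarrow>
        (LINT x:\<Omega>|lebesgue. (\<Sum>i\<in>UNIV. \<Sum>j\<in>UNIV. \<sigma> x $ i $ j * (Dv x (axis j 1) $ i))) = 0)"

end

theory Submission
  imports Defs
begin

lemma deriv_pos_pow:
  assumes n: "n \<ge> 2"
  shows "((\<lambda>x::real. (max 0 x)^n) has_real_derivative of_nat n * (max 0 x)^(n-1)) (at x)"
proof -
  obtain m where nm: "n = Suc (Suc m)" using n by (metis add_2_eq_Suc le_Suc_ex)
  show ?thesis
proof (cases "x = 0")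
  case True
  have "((\<lambda>y::real. ((max 0 y)^n - (max 0 0)^n) / (y - 0)) \<longlongrightarrow> 0) (at 0)"
  proof (rule Lim_null_comparison[where g="\<lambda>y. \<bar>y\<bar>^(n-1)"])
    have "norm (((max 0 y)^n - (max 0 0)^n) / (y - 0)) \<le> \<bar>y::real\<bar>^(n-1)" for y
    proof (cases "y > 0")
      case True
      then have "((max 0 y)^n - (max 0 0)^n) / (y - 0) = y^(n-1)"
        using n by (simp add: power_eq_if)
      then show ?thesis using True by simp
    next
      case False
      then show ?thesis using n by simp
    qed
    then show "\<forall>\<^sub>F y in at 0. norm (((max 0 y)^n - (max 0 0)^n) / (y - 0)) \<le> \<bar>y::real\<bar>^(n-1)"
      by (intro always_eventually allI)
    show "((\<lambda>y::real. \<bar>y\<bar>^(n-1)) \<longlongrightarrow> 0) (at 0)"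
      using n by (auto intro!: tendsto_eq_intros)
  qed
  moreover obtain m where "n = Suc (Suc m)" using n by (metis add_2_eq_Suc le_Suc_ex)
  ultimately show ?thesis using True by (simp add: has_field_derivative_iff)
next
  case False
  show ?thesis
  proof (cases "x > 0")
    case True
    have "((\<lambda>x::real. x^n) has_real_derivative of_nat n * (max 0 x)^(n-1)) (at x)"
      using True by (auto intro!: derivative_eq_intros)
    then show ?thesis
      by (rule has_field_derivative_transform_within_open[where S="{0<..}"]) (use True in auto)
  next
    case f2: False
    with False have "x < 0" by auto
    have "((\<lambda>x::real. 0) has_real_derivative of_nat n * (max 0 x)^(n-1)) (at x)"
      using \<open>x<0\<close> nm by (simp add: max_def)
    then show ?thesis
      by (rule has_field_derivative_transform_within_open[where S="{..<0}"]) (use \<open>x<0\<close> nm in auto)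
  qed
qed
qed

definition sp :: "real \<Rightarrow> real" where "sp x = max 0 x"

definition bPhi :: "real \<Rightarrow> real" where
  "bPhi t = sp t ^ 3 - 3 * sp (t - 1) ^ 3 + 3 * sp (t - 2) ^ 3 - sp (t - 3) ^ 3"
definition bphi :: "real \<Rightarrow> real" where
  "bphi t = 3 * (sp t ^ 2 - 3 * sp (t - 1) ^ 2 + 3 * sp (t - 2) ^ 2 - sp (t - 3) ^ 2)"
definition bdphi :: "real \<Rightarrow> real" where
  "bdphi t = 6 * (sp t - 3 * sp (t - 1) + 3 * sp (t - 2) - sp (t - 3))"

lemma sp_sq_deriv: "((\<lambda>x. sp (x - a) ^ 2) has_real_derivative 2 * sp (x - a)) (at x)"
proof -
  have "((\<lambda>x::real. (max 0 x)^2) has_real_derivative of_nat 2 * (max 0 (x - a))^(2-1)) (at (x - a))"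
    by (rule deriv_pos_pow) simp
  then have d1: "((\<lambda>x::real. (max 0 x)^2) has_real_derivative 2 * max 0 (x - a)) (at (x - a))" by simp
  have d2: "((\<lambda>x. x - a) has_real_derivative 1) (at x)" by (auto intro!: derivative_eq_intros)
  from DERIV_chain2[OF d1 d2] show ?thesis by (simp add: sp_def)
qed

lemma sp_cube_deriv: "((\<lambda>x. sp (x - a) ^ 3) has_real_derivative 3 * sp (x - a)^2) (at x)"
proof -
  have "((\<lambda>x::real. (max 0 x)^3) has_real_derivative of_nat 3 * (max 0 (x - a))^(3-1)) (at (x - a))"
    by (rule deriv_pos_pow) simp
  then have d1: "((\<lambda>x::real. (max 0 x)^3) has_real_derivative 3 * (max 0 (x - a))^2) (at (x - a))" by simp
  have d2: "((\<lambda>x. x - a) has_real_derivative 1) (at x)" by (auto intro!: derivative_eq_intros)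
  from DERIV_chain2[OF d1 d2] show ?thesis by (simp add: sp_def)
qed

lemma sp_deriv_sq0: "((\<lambda>x. sp x ^ 2) has_real_derivative 2 * sp x) (at x)"
  using sp_sq_deriv[of 0 x] by simp
lemma sp_deriv_cube0: "((\<lambda>x. sp x ^ 3) has_real_derivative 3 * sp x ^ 2) (at x)"
  using sp_cube_deriv[of 0 x] by simp

lemma bPhi_deriv: "(bPhi has_real_derivative bphi t) (at t)"
proof -
  have "((\<lambda>t. sp t ^ 3 - 3 * sp (t - 1) ^ 3 + 3 * sp (t - 2) ^ 3 - sp (t - 3) ^ 3) has_real_derivative
     3 * sp t ^ 2 - 3 * (3 * sp (t - 1) ^ 2) + 3 * (3 * sp (t - 2) ^ 2) - 3 * sp (t - 3) ^ 2) (at t)"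
    by (intro DERIV_diff DERIV_add DERIV_cmult sp_cube_deriv sp_deriv_cube0)
  then show ?thesis unfolding bPhi_def[abs_def] bphi_def by (simp add: algebra_simps)
qed

lemma bphi_deriv: "(bphi has_real_derivative bdphi t) (at t)"
proof -
  have "((\<lambda>t. 3 * (sp t ^ 2 - 3 * sp (t - 1) ^ 2 + 3 * sp (t - 2) ^ 2 - sp (t - 3) ^ 2)) has_real_derivative
     3 * (2 * sp t - 3 * (2 * sp (t - 1)) + 3 * (2 * sp (t - 2)) - 2 * sp (t - 3))) (at t)"
    by (intro DERIV_diff DERIV_add DERIV_cmult sp_sq_deriv sp_deriv_sq0)
  then show ?thesis unfolding bphi_def[abs_def] bdphi_def by (simp add: algebra_simps)
qed

lemma bphi_cont: "continuous_on UNIV bphi"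
  unfolding bphi_def[abs_def] sp_def by (intro continuous_intros)

lemma bdphi_cont: "continuous_on UNIV bdphi"
  unfolding bdphi_def[abs_def] sp_def by (intro continuous_intros)

lemma sp_le0: "t \<le> 0 \<Longrightarrow> sp t = 0" by (simp add: sp_def)
lemma sp_ge0: "t \<ge> 0 \<Longrightarrow> sp t = t" by (simp add: sp_def)

lemma bphi_big: "t \<ge> 3 \<Longrightarrow> bphi t = 0"
  by (simp add: bphi_def sp_ge0 power2_eq_square algebra_simps)
lemma bdphi_big: "t \<ge> 3 \<Longrightarrow> bdphi t = 0"
  by (simp add: bdphi_def sp_ge0 algebra_simps)
lemma bPhi_big: "t \<ge> 3 \<Longrightarrow> bPhi t = 6"
  by (simp add: bPhi_def sp_ge0 power3_eq_cube algebra_simps)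
lemma bphi_small: "t \<le> 0 \<Longrightarrow> bphi t = 0"
  by (simp add: bphi_def sp_le0)

lemma sp_small_bound: "t \<le> 3 \<Longrightarrow> 0 \<le> sp (t - a) \<and> sp (t - a) \<le> 3 + \<bar>a\<bar> \<or> a < 0"
  by (auto simp: sp_def)

lemma sp_range: "t \<le> 3 \<Longrightarrow> a \<ge> 0 \<Longrightarrow> 0 \<le> sp (t - a) \<and> sp (t - a) \<le> 3"
  by (auto simp: sp_def)

lemma bPhi_bound: "\<bar>bPhi t\<bar> \<le> 216"
proof (cases "t \<ge> 3")
  case True then show ?thesis by (simp add: bPhi_big)
next
  case False
  then have t: "t \<le> 3" by simp
  have b: "\<bar>sp (t - a) ^ 3\<bar> \<le> 27" if "a \<ge> 0" for a
  proof -
    have "0 \<le> sp (t - a)" "sp (t - a) \<le> 3" using sp_range[OF t that] by auto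
    then have "sp (t - a) ^ 3 \<le> 3 ^ 3" by (intro power_mono) auto
    then show ?thesis using \<open>0 \<le> sp (t - a)\<close> by simp
  qed
  from b[of 0] b[of 1] b[of 2] b[of 3] show ?thesis unfolding bPhi_def by simp
qed

lemma bphi_bound: "\<bar>bphi t\<bar> \<le> 216"
proof (cases "t \<ge> 3")
  case True then show ?thesis by (simp add: bphi_big)
next
  case False
  then have t: "t \<le> 3" by simp
  have b: "0 \<le> sp (t - a) ^ 2 \<and> sp (t - a) ^ 2 \<le> 9" if "a \<ge> 0" for a
  proof -
    have "0 \<le> sp (t - a)" "sp (t - a) \<le> 3" using sp_range[OF t that] by auto
    then have "sp (t - a) ^ 2 \<le> 3 ^ 2" by (intro power_mono) auto
    then show ?thesis by simp
  qed
  have aux: "\<bar>3 * (a - 3 * b + 3 * c - d)\<bar> \<le> 216"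
    if "0 \<le> a" "a \<le> 9" "0 \<le> b" "b \<le> 9" "0 \<le> c" "c \<le> 9" "0 \<le> d" "d \<le> 9" for a b c d :: real
    using that by (simp add: abs_le_iff)
  have "0 \<le> (0::real)" "0 \<le> (1::real)" "0 \<le> (2::real)" "0 \<le> (3::real)" by auto
  from b[OF this(1)] b[OF this(2)] b[OF this(3)] b[OF this(4)] show ?thesis unfolding bphi_def
    using aux by simp
qed

lemma bdphi_bound: "\<bar>bdphi t\<bar> \<le> 216"
proof (cases "t \<ge> 3")
  case True then show ?thesis by (simp add: bdphi_big)
next
  case False
  then have t: "t \<le> 3" by simp
  from sp_range[OF t, of 0] sp_range[OF t, of 1] sp_range[OF t, of 2] sp_range[OF t, of 3]
  show ?thesis unfolding bdphi_def abs_le_iff by simp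
qed

lemma bphi_nonneg: "bphi t \<ge> 0"
proof -
  consider "t \<le> 0" | "0 \<le> t \<and> t \<le> 1" | "1 \<le> t \<and> t \<le> 2" | "2 \<le> t \<and> t \<le> 3" | "3 \<le> t" by linarith
  then show ?thesis
  proof cases
    case 1 then show ?thesis by (simp add: bphi_small)
  next
    case 2 then show ?thesis by (simp add: bphi_def sp_def)
  next
    case 3
    then have "(t - 1) * (t - 2) \<le> 0" by (simp add: mult_nonneg_nonpos)
    then have "t^2 - 3 * (t - 1)^2 \<ge> 0" by (simp add: power2_eq_square algebra_simps)
    with 3 show ?thesis by (simp add: bphi_def sp_def)
  next
    case 4
    have "t^2 - 3 * (t - 1)^2 + 3 * (t - 2)^2 = (t - 3)^2" by (simp add: power2_eq_square algebra_simps)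
    with 4 show ?thesis by (simp add: bphi_def sp_def)
  next
    case 5 then show ?thesis by (simp add: bphi_big)
  qed
qed

lemma bphi_lower: "1 \<le> t \<Longrightarrow> t \<le> 2 \<Longrightarrow> bphi t \<ge> 3"
proof -
  assume a: "1 \<le> t" "t \<le> 2"
  then have "(t - 1) * (t - 2) \<le> 0" by (simp add: mult_nonneg_nonpos)
  then have "t^2 - 3 * (t - 1)^2 \<ge> 1" by (simp add: power2_eq_square algebra_simps)
  with a show ?thesis by (simp add: bphi_def sp_def)
qed

lemma bphi_supp: "bphi t \<noteq> 0 \<Longrightarrow> 0 < t \<and> t < 3"
proof (rule ccontr)
  assume "bphi t \<noteq> 0" "\<not> (0 < t \<and> t < 3)"
  then show False using bphi_small[of t] bphi_big[of t] by linarith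
qed

lemma axis_comp: "(axis j (1::real)) $ i = (if i = j then 1 else 0)"
  by (simp add: axis_def)

lemma weak_kernel:
  fixes f :: "2 \<Rightarrow> 2 \<Rightarrow> real^2 \<Rightarrow> real" and u u' w w' :: "real \<Rightarrow> real"
    and c :: "real^2" and s :: real and i0 :: 2
  assumes W: "\<And>v Dv. C1_field v Dv \<Longrightarrow>
      (\<integral>x. (\<Sum>i\<in>UNIV. \<Sum>j\<in>UNIV. f i j x * (Dv x (axis j 1) $ i)) \<partial>lborel) = 0"
    and du: "\<And>t. (u has_real_derivative u' t) (at t)"
    and dw: "\<And>t. (w has_real_derivative w' t) (at t)"
    and cu: "continuous_on UNIV u'" and cw: "continuous_on UNIV w'"
  shows "(\<integral>x. f i0 1 x * (s * u' (s * (x$1 - c$1)) * w (s * (x$2 - c$2)))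
              + f i0 2 x * (s * u (s * (x$1 - c$1)) * w' (s * (x$2 - c$2))) \<partial>lborel) = 0"
proof -
  define g1 where "g1 x = s * (x$1 - c$1)" for x :: "real^2"
  define g2 where "g2 x = s * (x$2 - c$2)" for x :: "real^2"
  define v where "v x = (u (g1 x) * w (g2 x)) *\<^sub>R axis i0 (1::real)" for x
  define Dv where "Dv x h = ((s * u' (g1 x) * w (g2 x)) * h$1 + (s * u (g1 x) * w' (g2 x)) * h$2) *\<^sub>R axis i0 (1::real)"
    for x h :: "real^2"
  have dg1: "(g1 has_derivative (\<lambda>h. s * h$1)) (at x)" for x
  proof -
    have "((\<lambda>x::real^2. x$1) has_derivative (\<lambda>h. h$1)) (at x)"
      by (rule bounded_linear_imp_has_derivative) (rule bounded_linear_vec_nth)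
    then show ?thesis unfolding g1_def[abs_def]
      by (auto intro!: derivative_eq_intros)
  qed
  have dg2: "(g2 has_derivative (\<lambda>h. s * h$2)) (at x)" for x
  proof -
    have "((\<lambda>x::real^2. x$2) has_derivative (\<lambda>h. h$2)) (at x)"
      by (rule bounded_linear_imp_has_derivative) (rule bounded_linear_vec_nth)
    then show ?thesis unfolding g2_def[abs_def]
      by (auto intro!: derivative_eq_intros)
  qed
  have dU: "((\<lambda>x. u (g1 x)) has_derivative (\<lambda>h. s * h$1 * u' (g1 x))) (at x)" for x
    using DERIV_compose_FDERIV[OF du dg1] .
  have dWW: "((\<lambda>x. w (g2 x)) has_derivative (\<lambda>h. s * h$2 * w' (g2 x))) (at x)" for x
    using DERIV_compose_FDERIV[OF dw dg2] .
  have dv: "(v has_derivative Dv x) (at x)" for x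
  proof -
    have "((\<lambda>x. u (g1 x) * w (g2 x)) has_derivative
        (\<lambda>h. u (g1 x) * (s * h$2 * w' (g2 x)) + (s * h$1 * u' (g1 x)) * w (g2 x))) (at x)"
      by (rule has_derivative_mult[OF dU dWW])
    from has_derivative_scaleR_left[OF this, of "axis i0 (1::real)"]
    show ?thesis unfolding v_def[abs_def] Dv_def
      by (rule has_derivative_eq_rhs) (auto simp: fun_eq_iff algebra_simps)
  qed
  have cg1: "continuous_on UNIV g1" unfolding g1_def[abs_def] by (intro continuous_intros)
  have cg2: "continuous_on UNIV g2" unfolding g2_def[abs_def] by (intro continuous_intros)
  have cu0: "continuous_on UNIV u"
    using du by (meson DERIV_isCont continuous_at_imp_continuous_on)
  have cw0: "continuous_on UNIV w"
    using dw by (meson DERIV_isCont continuous_at_imp_continuous_on)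
  have c1: "continuous_on UNIV (\<lambda>x. u' (g1 x))" by (rule continuous_on_compose2[OF cu cg1]) auto
  have c2: "continuous_on UNIV (\<lambda>x. w' (g2 x))" by (rule continuous_on_compose2[OF cw cg2]) auto
  have c3: "continuous_on UNIV (\<lambda>x. u (g1 x))" by (rule continuous_on_compose2[OF cu0 cg1]) auto
  have c4: "continuous_on UNIV (\<lambda>x. w (g2 x))" by (rule continuous_on_compose2[OF cw0 cg2]) auto
  have "C1_field v Dv"
    unfolding C1_field_def
  proof (intro conjI allI)
    show "(v has_derivative Dv x) (at x)" for x by (rule dv)
    fix i j :: 2
    have eq: "(\<lambda>x. Dv x (axis j 1) $ i) = (\<lambda>x. ((s * u' (g1 x) * w (g2 x)) * (axis j (1::real))$1
       + (s * u (g1 x) * w' (g2 x)) * (axis j (1::real))$2) * (axis i0 (1::real)) $ i)"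
      unfolding Dv_def by simp
    show "continuous_on UNIV (\<lambda>x. Dv x (axis j 1) $ i)"
      unfolding eq by (intro continuous_intros c1 c2 c3 c4)
  qed
  from W[OF this] have "(\<integral>x. (\<Sum>i\<in>UNIV. \<Sum>j\<in>UNIV. f i j x * (Dv x (axis j 1) $ i)) \<partial>lborel) = 0" .
  moreover have "(\<Sum>i\<in>UNIV. \<Sum>j\<in>UNIV. f i j x * (Dv x (axis j 1) $ i)) =
      f i0 1 x * (s * u' (s * (x$1 - c$1)) * w (s * (x$2 - c$2)))
              + f i0 2 x * (s * u (s * (x$1 - c$1)) * w' (s * (x$2 - c$2)))" for x
  proof -
    have "i0 = 1 \<or> i0 = 2" using exhaust_2 by blast
    then show ?thesis
      unfolding Dv_def g1_def g2_def by (auto simp: sum_2 axis_comp)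
  qed
  ultimately show ?thesis by simp
qed

lemma distr_lborel_affine1:
  fixes t :: "real^2"
  assumes "\<bar>c\<bar> = 1"
  shows "distr lborel borel (\<lambda>x. t + c *\<^sub>R x) = (lborel :: (real^2) measure)"
proof -
  have "c \<noteq> 0" using assms by auto
  from lborel_affine[OF this, of t] assms show ?thesis by (simp add: density_1)
qed

lemma integral_affine1:
  fixes f :: "real^2 \<Rightarrow> real"
  assumes f: "f \<in> borel_measurable borel" and c: "\<bar>c\<bar> = 1"
  shows "(\<integral>x. f (t + c *\<^sub>R x) \<partial>lborel) = integral\<^sup>L lborel f"
proof -
  have "integral\<^sup>L lborel f = integral\<^sup>L (distr lborel borel (\<lambda>x. t + c *\<^sub>R x)) f"
    by (simp only: distr_lborel_affine1[OF c])
  also have "\<dots> = (\<integral>x. f (t + c *\<^sub>R x) \<partial>lborel)"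
    by (rule integral_distr) (auto simp: f)
  finally show ?thesis by simp
qed

lemma integrable_affine1:
  fixes f :: "real^2 \<Rightarrow> real"
  assumes f: "f \<in> borel_measurable borel" and c: "\<bar>c\<bar> = 1"
  shows "integrable lborel (\<lambda>x. f (t + c *\<^sub>R x)) \<longleftrightarrow> integrable lborel f"
proof -
  have "integrable lborel f = integrable (distr lborel borel (\<lambda>x. t + c *\<^sub>R x)) f"
    by (simp only: distr_lborel_affine1[OF c])
  also have "\<dots> = integrable lborel (\<lambda>x. f (t + c *\<^sub>R x))"
    by (rule integrable_distr_eq) (auto simp: f)
  finally show ?thesis by simp
qed

lemma integral_transl:
  fixes f :: "real^2 \<Rightarrow> real"
  assumes f: "f \<in> borel_measurable borel"
  shows "(\<integral>x. f (x - h) \<partial>lborel) = integral\<^sup>L lborel f"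
  using integral_affine1[OF f, of 1 "-h"] by simp

lemma integral_refl:
  fixes f :: "real^2 \<Rightarrow> real"
  assumes f: "f \<in> borel_measurable borel"
  shows "(\<integral>y. f (x - y) \<partial>lborel) = integral\<^sup>L lborel f"
  using integral_affine1[OF f, of "-1" x] by simp

lemma integrable_transl:
  fixes f :: "real^2 \<Rightarrow> real"
  assumes f: "f \<in> borel_measurable borel"
  shows "integrable lborel (\<lambda>x. f (x - h)) \<longleftrightarrow> integrable lborel f"
  using integrable_affine1[OF f, of 1 "-h"] by simp

lemma integrable_refl:
  fixes f :: "real^2 \<Rightarrow> real"
  assumes f: "f \<in> borel_measurable borel"
  shows "integrable lborel (\<lambda>y. f (x - y)) \<longleftrightarrow> integrable lborel f"
  using integrable_affine1[OF f, of "-1" x] by simp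

lemma amgm_pt:
  fixes a b t :: real
  assumes t: "t > 0"
  shows "\<bar>a * b\<bar> \<le> t / 2 * a^2 + 1 / (2 * t) * b^2"
proof -
  have "0 \<le> (t * \<bar>a\<bar> - \<bar>b\<bar>)^2" by simp
  then have "2 * t * \<bar>a * b\<bar> \<le> t^2 * a^2 + b^2"
    by (simp add: power2_eq_square algebra_simps abs_mult)
  then have "\<bar>a * b\<bar> \<le> (t^2 * a^2 + b^2) / (2 * t)"
    using t by (simp add: field_simps)
  also have "\<dots> = t / 2 * a^2 + 1 / (2 * t) * b^2"
    using t by (simp add: field_simps power2_eq_square)
  finally show ?thesis .
qed

lemma abs_prod_le_sq: "\<bar>a * b\<bar> \<le> (a::real)^2 + b^2"
proof -
  have "\<bar>a * b\<bar> \<le> 1 / 2 * a^2 + 1 / (2 * 1) * b^2" by (rule amgm_pt) simp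
  also have "\<dots> \<le> a^2 + b^2" using zero_le_power2[of a] zero_le_power2[of b] by linarith
  finally show ?thesis .
qed

definition L2 :: "(real^2 \<Rightarrow> real) \<Rightarrow> bool" where
  "L2 f \<longleftrightarrow> f \<in> borel_measurable borel \<and> integrable lborel (\<lambda>x. (f x)^2)"

lemma L2_prod_integrable:
  assumes "L2 f" "L2 g"
  shows "integrable lborel (\<lambda>x. f x * g x)"
proof (rule Bochner_Integration.integrable_bound)
  show "integrable lborel (\<lambda>x. (f x)^2 + (g x)^2)"
    using assms unfolding L2_def by auto
  show "(\<lambda>x. f x * g x) \<in> borel_measurable lborel"
    using assms unfolding L2_def by auto
  show "AE x in lborel. norm (f x * g x) \<le> norm ((f x)^2 + (g x)^2)"
    using abs_prod_le_sq by (intro AE_I2) auto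
qed

lemma L2_amgm:
  assumes "L2 f" "L2 g" and t: "t > 0"
  shows "\<bar>\<integral>x. f x * g x \<partial>lborel\<bar> \<le> t / 2 * (\<integral>x. (f x)^2 \<partial>lborel) + 1 / (2 * t) * (\<integral>x. (g x)^2 \<partial>lborel)"
proof -
  have i1: "integrable lborel (\<lambda>x. (f x)^2)" "integrable lborel (\<lambda>x. (g x)^2)"
    using assms unfolding L2_def by auto
  have "\<bar>\<integral>x. f x * g x \<partial>lborel\<bar> \<le> (\<integral>x. \<bar>f x * g x\<bar> \<partial>lborel)"
    by (rule integral_abs_bound)
  also have "\<dots> \<le> (\<integral>x. t / 2 * (f x)^2 + 1 / (2 * t) * (g x)^2 \<partial>lborel)"
    by (rule integral_mono) (use L2_prod_integrable[OF assms(1,2)] i1 amgm_pt[OF t] in auto)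
  also have "\<dots> = t / 2 * (\<integral>x. (f x)^2 \<partial>lborel) + 1 / (2 * t) * (\<integral>x. (g x)^2 \<partial>lborel)"
    using i1 by simp
  finally show ?thesis .
qed

lemma L2_transl:
  assumes "L2 f"
  shows "L2 (\<lambda>x. f (x - h))" and "(\<integral>x. (f (x - h))^2 \<partial>lborel) = (\<integral>x. (f x)^2 \<partial>lborel)"
proof -
  have fm: "f \<in> borel_measurable borel" using assms by (simp add: L2_def)
  have f2: "(\<lambda>x. (f x)^2) \<in> borel_measurable borel" using fm by measurable
  show "L2 (\<lambda>x. f (x - h))"
    unfolding L2_def using assms integrable_transl[OF f2, of h] fm by (auto simp: L2_def)
  show "(\<integral>x. (f (x - h))^2 \<partial>lborel) = (\<integral>x. (f x)^2 \<partial>lborel)"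
    using integral_transl[OF f2, of h] by simp
qed

lemma L2_diff: "L2 f \<Longrightarrow> L2 g \<Longrightarrow> L2 (\<lambda>x. f x - g x)"
proof -
  assume a: "L2 f" "L2 g"
  have "integrable lborel (\<lambda>x. (f x - g x)^2)"
  proof (rule Bochner_Integration.integrable_bound)
    show "integrable lborel (\<lambda>x. 2 * (f x)^2 + 2 * (g x)^2)" using a by (auto simp: L2_def)
    show "(\<lambda>x. (f x - g x)^2) \<in> borel_measurable lborel" using a by (auto simp: L2_def)
    have "(u - v)^2 \<le> 2 * u^2 + 2 * v^2" for u v :: real
    proof -
      have "0 \<le> (u + v)^2" by simp
      then show ?thesis by (simp add: power2_eq_square algebra_simps)
    qed
    then show "AE x in lborel. norm ((f x - g x)^2) \<le> norm (2 * (f x)^2 + 2 * (g x)^2)"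
      by (intro AE_I2) simp
  qed
  then show ?thesis using a by (auto simp: L2_def)
qed

lemma ind_shift_sq_bound:
  fixes A U C :: "(real^2) set" and x h :: "real^2"
  assumes CA: "C \<subseteq> A" and AU: "A \<subseteq> U" and d: "\<forall>x\<in>C. \<forall>y\<in>-U. d \<le> dist x y"
    and h: "norm h < d"
  shows "(indicator A (x - h) - indicator A x :: real)^2 \<le> indicator (U - C) x + indicator (U - C) (x - h)"
proof -
  have dd: "dist x (x - h) = norm h" "dist (x - h) x = norm h" by (simp_all add: dist_norm)
  consider "x - h \<in> A" "x \<notin> A" | "x - h \<notin> A" "x \<in> A" | "(x - h \<in> A) = (x \<in> A)" by blast
  then show ?thesis
  proof cases
    case 1
    then have "x - h \<in> U" using AU by auto
    show ?thesis
    proof (cases "x - h \<in> C")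
      case True
      have "x \<in> U"
      proof (rule ccontr)
        assume "x \<notin> U"
        then have "d \<le> dist (x - h) x" using d True by blast
        then show False using dd h by simp
      qed
      then have "x \<in> U - C" using 1 CA by auto
      then show ?thesis using 1 by (simp add: indicator_def)
    next
      case False
      then have "x - h \<in> U - C" using \<open>x - h \<in> U\<close> by auto
      then show ?thesis using 1 by (simp add: indicator_def)
    qed
  next
    case 2
    then have "x \<in> U" using AU by auto
    show ?thesis
    proof (cases "x \<in> C")
      case True
      have "x - h \<in> U"
      proof (rule ccontr)
        assume "x - h \<notin> U"
        then have "d \<le> dist x (x - h)" using d True by blast
        then show False using dd h by simp
      qed
      then have "x - h \<in> U - C" using 2 CA by auto
      then show ?thesis using 2 by (simp add: indicator_def)
    next
      case False
      then have "x \<in> U - C" using \<open>x \<in> U\<close> by auto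
      then show ?thesis using 2 by (simp add: indicator_def)
    qed
  next
    case 3
    then have "(indicator A (x - h) - indicator A x :: real)^2 = 0" by (simp add: indicator_def)
    then show ?thesis by (simp add: indicator_def)
  qed
qed

lemma ind_cont:
  fixes A :: "(real^2) set"
  assumes A: "A \<in> sets borel" "bounded A" and p: "L2 p" and e: "\<epsilon> > 0"
  shows "\<exists>\<delta>>0. \<forall>h. norm h < \<delta> \<longrightarrow> \<bar>\<integral>x. p x * (indicator A (x - h) - indicator A x) \<partial>lborel\<bar> < \<epsilon>"
proof -
  define Np where "Np = (\<integral>x. (p x)^2 \<partial>lborel)"
  have Np0: "Np \<ge> 0" unfolding Np_def by (rule integral_nonneg_AE) simp
  define t where "t = \<epsilon> / (Np + 1)"
  have t: "t > 0" unfolding t_def using e Np0 by simp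
  define e where "e = t * \<epsilon> / 8"
  have e0: "e > 0" unfolding e_def using t e by simp
  have Aleb: "A \<in> sets lebesgue" using A by simp
  obtain U where U: "open U" "A \<subseteq> U" "(U - A) \<in> lmeasurable" "emeasure lebesgue (U - A) < ennreal e"
    using sets_lebesgue_outer_open[OF Aleb e0] by blast
  obtain C where C: "closed C" "C \<subseteq> A" "A - C \<in> lmeasurable" "emeasure lebesgue (A - C) < ennreal e"
    using sets_lebesgue_inner_closed[OF Aleb e0] by blast
  have "compact C" using C(1,2) A(2) by (meson bounded_subset compact_eq_bounded_closed)
  moreover have "closed (-U)" using U(1) by auto
  moreover have "C \<inter> -U = {}" using C(2) U(2) by auto
  ultimately obtain d where d: "d > 0" "\<forall>x\<in>C. \<forall>y\<in>-U. d \<le> dist x y"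
    using separate_compact_closed[of C "-U"] by blast
  have UCb: "U - C \<in> sets borel" using U(1) C(1) by auto
  have sub: "U - C \<subseteq> (U - A) \<union> (A - C)" using C(2) by auto
  have mUA: "measure lebesgue (U - A) < e"
    using U(3,4) e0 by (simp add: emeasure_eq_measure2 ennreal_less_iff)
  have mAC: "measure lebesgue (A - C) < e"
    using C(3,4) e0 by (simp add: emeasure_eq_measure2 ennreal_less_iff)
  have UAC: "(U - A) \<union> (A - C) \<in> lmeasurable" using U(3) C(3) by auto
  have UCl: "U - C \<in> lmeasurable" by (rule fmeasurableI2[OF UAC sub]) (use UCb in simp)
  have "measure lebesgue (U - C) \<le> measure lebesgue ((U - A) \<union> (A - C))"
    by (rule measure_mono_fmeasurable[OF sub]) (use UCb UAC in auto)
  also have "\<dots> \<le> measure lebesgue (U - A) + measure lebesgue (A - C)"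
    by (rule measure_Un_le) (use U(3) C(3) in auto)
  also have "\<dots> < 2 * e" using mUA mAC by simp
  finally have mUC0: "measure lebesgue (U - C) < 2 * e" .
  have mUC: "measure lborel (U - C) < 2 * e" using mUC0 UCb by simp
  have finUC: "emeasure lborel (U - C) < \<infinity>"
    using UCl UCb by (simp add: fmeasurable_def)
  have Abor: "A \<in> sets lborel" using A by simp
  have finA: "emeasure lborel A < \<infinity>" using emeasure_bounded_finite[OF A(2)] .
  have iA: "integrable lborel (indicator A :: real^2 \<Rightarrow> real)" using Abor finA by simp
  have iUC: "integrable lborel (indicator (U - C) :: real^2 \<Rightarrow> real)" using UCb finUC by simp
  have indAm: "(indicator A :: real^2 \<Rightarrow> real) \<in> borel_measurable borel" using Abor by simp
  have indUCm: "(indicator (U - C) :: real^2 \<Rightarrow> real) \<in> borel_measurable borel" using UCb by simp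
  show ?thesis
  proof (intro exI[of _ d] conjI allI impI)
    show "d > 0" by (rule d)
    fix h :: "real^2" assume h: "norm h < d"
    define D where "D x = (indicator A (x - h) - indicator A x :: real)" for x
    have iAh: "integrable lborel (\<lambda>x. indicator A (x - h) :: real)"
      using integrable_transl[OF indAm, of h] iA by simp
    have iUCh: "integrable lborel (\<lambda>x. indicator (U - C) (x - h) :: real)"
      using integrable_transl[OF indUCm, of h] iUC by simp
    have Dm: "D \<in> borel_measurable borel" unfolding D_def using Abor by measurable
    have D2b: "(D x)^2 \<le> indicator A (x - h) + indicator A x" for x
      unfolding D_def by (simp add: indicator_def)
    have iD2: "integrable lborel (\<lambda>x. (D x)^2)"
    proof (rule Bochner_Integration.integrable_bound)
      show "integrable lborel (\<lambda>x. indicator A (x - h) + indicator A x :: real)"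
        using iAh iA by simp
      show "(\<lambda>x. (D x)^2) \<in> borel_measurable lborel" using Dm by simp
      show "AE x in lborel. norm ((D x)^2) \<le> norm (indicator A (x - h) + indicator A x :: real)"
        using D2b by (intro AE_I2) (simp add: indicator_def)
    qed
    have L2D: "L2 D" using Dm iD2 by (simp add: L2_def)
    have "(\<integral>x. (D x)^2 \<partial>lborel) \<le> (\<integral>x. indicator (U - C) x + indicator (U - C) (x - h) \<partial>lborel)"
      by (rule integral_mono[OF iD2]) (use iUC iUCh ind_shift_sq_bound[OF C(2) U(2) d(2) h] in
          \<open>auto simp: D_def\<close>)
    also have "\<dots> = measure lborel (U - C) + measure lborel (U - C)"
      using iUC iUCh integral_transl[OF indUCm, of h] by simp
    also have "\<dots> < 4 * e" using mUC by simp
    finally have ID2: "(\<integral>x. (D x)^2 \<partial>lborel) < 4 * e" .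
    have "\<bar>\<integral>x. p x * D x \<partial>lborel\<bar> \<le> t / 2 * Np + 1 / (2 * t) * (\<integral>x. (D x)^2 \<partial>lborel)"
      using L2_amgm[OF p L2D t] unfolding Np_def .
    also have "\<dots> \<le> t / 2 * Np + 1 / (2 * t) * (4 * e)"
      using ID2 t by (intro add_left_mono mult_left_mono) auto
    also have "1 / (2 * t) * (4 * e) = \<epsilon> / 4" unfolding e_def using t by (simp add: field_simps)
    also have "t / 2 * Np \<le> \<epsilon> / 2"
    proof -
      have "t * Np = \<epsilon> * (Np / (Np + 1))" unfolding t_def using Np0 by (simp add: field_simps)
      also have "\<dots> \<le> \<epsilon> * 1" using Np0 e by (intro mult_left_mono) auto
      finally show ?thesis by simp
    qed
    then have "t / 2 * Np + \<epsilon> / 4 < \<epsilon>" using e by simp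
    finally show "\<bar>\<integral>x. p x * (indicator A (x - h) - indicator A x) \<partial>lborel\<bar> < \<epsilon>"
      unfolding D_def .
  qed
qed

lemma eps_tendsto:
  fixes G :: "real^2 \<Rightarrow> real"
  shows "(G \<longlongrightarrow> 0) (nhds 0) \<longleftrightarrow> (\<forall>\<epsilon>>0. \<exists>\<delta>>0. \<forall>h. norm h < \<delta> \<longrightarrow> \<bar>G h\<bar> < \<epsilon>)"
  unfolding tendsto_iff eventually_nhds_metric by (simp add: dist_norm)

lemma L2_ind:
  assumes "A \<in> sets borel" "bounded A"
  shows "L2 (indicator A :: real^2 \<Rightarrow> real)"
proof -
  have "emeasure lborel A < \<infinity>" using emeasure_bounded_finite[OF assms(2)] .
  then have "integrable lborel (indicator A :: real^2 \<Rightarrow> real)" using assms(1) by simp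
  moreover have "(\<lambda>x. (indicator A x :: real)^2) = indicator A" by (auto simp: indicator_def fun_eq_iff)
  ultimately show ?thesis using assms(1) by (simp add: L2_def)
qed

lemma simple_part:
  fixes s p :: "real^2 \<Rightarrow> real"
  assumes s: "simple_function lborel s" and sS: "\<And>x. x \<notin> S \<Longrightarrow> s x = 0" and S: "bounded S"
    and p: "L2 p"
  shows "((\<lambda>h. \<integral>x. p x * (s (x - h) - s x) \<partial>lborel) \<longlongrightarrow> 0) (nhds 0)"
proof -
  define R where "R = s ` UNIV - {0}"
  have finR: "finite R" using s unfolding simple_function_def R_def by simp
  have Ab: "s -` {c} \<in> sets borel" if "c \<in> R" for c
    using s that unfolding simple_function_def R_def by auto
  have Abd: "bounded (s -` {c})" if "c \<in> R" for c
  proof -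
    have "s -` {c} \<subseteq> S" using sS that unfolding R_def by force
    then show ?thesis using S bounded_subset by blast
  qed
  have rep: "s x = (\<Sum>c\<in>R. c * indicator (s -` {c}) x)" for x
  proof -
    have "(\<Sum>c\<in>R. c * indicator (s -` {c}) x) = (\<Sum>c\<in>R. if c = s x then s x else 0)"
      by (intro sum.cong) (auto simp: indicator_def)
    also have "\<dots> = (if s x \<in> R then s x else 0)" using finR by (simp add: sum.delta')
    also have "\<dots> = s x" unfolding R_def by auto
    finally show ?thesis by simp
  qed
  define I where "I c h = (\<integral>x. p x * (indicator (s -` {c}) (x - h) - indicator (s -` {c}) x) \<partial>lborel)"
    for c h
  have L2c: "L2 (\<lambda>x. indicator (s -` {c}) (x - h) - indicator (s -` {c}) x :: real)" if "c \<in> R" for c h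
    using L2_diff[OF L2_transl(1)[OF L2_ind[OF Ab[OF that] Abd[OF that]]] L2_ind[OF Ab[OF that] Abd[OF that]]] .
  have eq: "(\<integral>x. p x * (s (x - h) - s x) \<partial>lborel) = (\<Sum>c\<in>R. c * I c h)" for h
  proof -
    have "(\<lambda>x. p x * (s (x - h) - s x)) =
       (\<lambda>x. \<Sum>c\<in>R. c * (p x * (indicator (s -` {c}) (x - h) - indicator (s -` {c}) x)))"
      by (subst (1 2) rep) (simp add: fun_eq_iff sum_subtractf[symmetric] sum_distrib_left algebra_simps)
    then have "(\<integral>x. p x * (s (x - h) - s x) \<partial>lborel) =
        (\<integral>x. (\<Sum>c\<in>R. c * (p x * (indicator (s -` {c}) (x - h) - indicator (s -` {c}) x))) \<partial>lborel)"
      by simp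
    also have "\<dots> = (\<Sum>c\<in>R. (\<integral>x. c * (p x * (indicator (s -` {c}) (x - h) - indicator (s -` {c}) x)) \<partial>lborel))"
      by (rule Bochner_Integration.integral_sum) (use L2_prod_integrable[OF p L2c] in auto)
    also have "\<dots> = (\<Sum>c\<in>R. c * I c h)" unfolding I_def by simp
    finally show ?thesis .
  qed
  have lim: "((\<lambda>h. c * I c h) \<longlongrightarrow> 0) (nhds 0)" if "c \<in> R" for c
  proof -
    have "(I c \<longlongrightarrow> 0) (nhds 0)"
      unfolding eps_tendsto I_def using ind_cont[OF Ab[OF that] Abd[OF that] p] by blast
    then show ?thesis by (rule tendsto_mult_right_zero)
  qed
  have "((\<lambda>h. \<Sum>c\<in>R. c * I c h) \<longlongrightarrow> 0) (nhds 0)"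
    by (rule tendsto_null_sum) (rule lim)
  then show ?thesis unfolding eq .
qed

lemma simple_approx:
  fixes q :: "real^2 \<Rightarrow> real"
  assumes q: "L2 q" and eta: "\<eta> > 0"
  shows "\<exists>s. simple_function lborel s \<and> (\<forall>x. \<bar>s x\<bar> \<le> 2 * \<bar>q x\<bar>) \<and> (\<integral>x. (q x - s x)^2 \<partial>lborel) < \<eta>"
proof -
  have qm: "q \<in> borel_measurable lborel" using q by (simp add: L2_def)
  obtain F where F: "\<And>i. simple_function lborel (F i)" "\<And>x. (\<lambda>i. F i x) \<longlonglongrightarrow> q x"
    "\<And>i x. dist (F i x) 0 \<le> 2 * dist (q x) 0"
    using borel_measurable_implies_sequence_metric[OF qm, of 0] by auto
  have Fb: "\<bar>F i x\<bar> \<le> 2 * \<bar>q x\<bar>" for i x using F(3)[of i x] by simp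
  have Fm: "F i \<in> borel_measurable lborel" for i using F(1) by (rule borel_measurable_simple_function)
  have "(\<lambda>i. \<integral>x. (q x - F i x)^2 \<partial>lborel) \<longlonglongrightarrow> (\<integral>x. 0 \<partial>(lborel :: (real^2) measure))"
  proof (rule Bochner_Integration.integral_dominated_convergence[where w="\<lambda>x. 9 * (q x)^2" and s="\<lambda>i x. (q x - F i x)^2" and f="\<lambda>x. 0"])
    show "(\<lambda>x. 0::real) \<in> borel_measurable lborel" by simp
    show "(\<lambda>x. (q x - F i x)^2) \<in> borel_measurable lborel" for i using qm Fm[of i] by measurable
    show "integrable lborel (\<lambda>x. 9 * (q x)^2)" using q by (simp add: L2_def)
    show "AE x in lborel. (\<lambda>i. (q x - F i x)^2) \<longlonglongrightarrow> 0"
    proof (intro AE_I2)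
      fix x
      have "(\<lambda>i. q x - F i x) \<longlonglongrightarrow> q x - q x" by (rule tendsto_diff[OF tendsto_const F(2)])
      then have "(\<lambda>i. (q x - F i x)^2) \<longlonglongrightarrow> (q x - q x)^2" by (rule tendsto_power)
      then show "(\<lambda>i. (q x - F i x)^2) \<longlonglongrightarrow> 0" by simp
    qed
    show "AE x in lborel. norm ((q x - F i x)^2) \<le> 9 * (q x)^2" for i
    proof (intro AE_I2)
      fix x
      have "\<bar>q x - F i x\<bar> \<le> 3 * \<bar>q x\<bar>" using Fb[of i x] by linarith
      then have "\<bar>q x - F i x\<bar>^2 \<le> (3 * \<bar>q x\<bar>)^2" by (intro power_mono) auto
      then show "norm ((q x - F i x)^2) \<le> 9 * (q x)^2" by (simp add: power_mult_distrib)
    qed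
  qed
  then have "(\<lambda>i. \<integral>x. (q x - F i x)^2 \<partial>lborel) \<longlonglongrightarrow> 0" by simp
  from LIMSEQ_D[OF this eta] obtain no where
    "\<forall>n\<ge>no. norm ((\<integral>x. (q x - F n x)^2 \<partial>lborel) - 0) < \<eta>" by blast
  then have "(\<integral>x. (q x - F no x)^2 \<partial>lborel) < \<eta>" by simp
  then show ?thesis using F(1) Fb by (intro exI[of _ "F no"]) blast
qed

lemma transl_cont:
  fixes p q :: "real^2 \<Rightarrow> real"
  assumes p: "L2 p" and q: "L2 q" and qS: "\<And>x. x \<notin> S \<Longrightarrow> q x = 0" and S: "bounded S"
    and e: "\<epsilon> > 0"
  shows "\<exists>\<delta>>0. \<forall>h. norm h < \<delta> \<longrightarrow>
     \<bar>(\<integral>x. p x * q (x - h) \<partial>lborel) - (\<integral>x. p x * q x \<partial>lborel)\<bar> < \<epsilon>"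
proof -
  define Np where "Np = (\<integral>x. (p x)^2 \<partial>lborel)"
  have Np0: "Np \<ge> 0" unfolding Np_def by (rule integral_nonneg_AE) simp
  define t where "t = \<epsilon> / (6 * (Np + 1))"
  have t: "t > 0" unfolding t_def using e Np0 by simp
  have tNp: "t / 2 * Np \<le> \<epsilon> / 12"
  proof -
    have "t * Np = \<epsilon> / 6 * (Np / (Np + 1))" unfolding t_def using Np0 by (simp add: field_simps)
    also have "\<dots> \<le> \<epsilon> / 6 * 1" using Np0 e by (intro mult_left_mono) auto
    finally show ?thesis by (simp add: algebra_simps)
  qed
  define \<eta> where "\<eta> = t * \<epsilon> / 6"
  have eta: "\<eta> > 0" unfolding \<eta>_def using t e by simp
  obtain s where s: "simple_function lborel s" "\<And>x. \<bar>s x\<bar> \<le> 2 * \<bar>q x\<bar>"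
    and sq: "(\<integral>x. (q x - s x)^2 \<partial>lborel) < \<eta>"
    using simple_approx[OF q eta] by blast
  have sS: "s x = 0" if "x \<notin> S" for x using s(2)[of x] qS[OF that] by simp
  have sm: "s \<in> borel_measurable borel" using borel_measurable_simple_function[OF s(1)] by simp
  have L2s: "L2 s"
  proof -
    have "integrable lborel (\<lambda>x. (s x)^2)"
    proof (rule Bochner_Integration.integrable_bound)
      show "integrable lborel (\<lambda>x. 4 * (q x)^2)" using q by (simp add: L2_def)
      show "(\<lambda>x. (s x)^2) \<in> borel_measurable lborel" using sm by simp
      show "AE x in lborel. norm ((s x)^2) \<le> norm (4 * (q x)^2)"
      proof (intro AE_I2)
        fix x
        have "\<bar>s x\<bar>^2 \<le> (2 * \<bar>q x\<bar>)^2" using s(2)[of x] by (intro power_mono) auto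
        then show "norm ((s x)^2) \<le> norm (4 * (q x)^2)" by (simp add: power_mult_distrib)
      qed
    qed
    then show ?thesis using sm by (simp add: L2_def)
  qed
  define r where "r x = q x - s x" for x
  have L2r: "L2 r" unfolding r_def by (rule L2_diff[OF q L2s])
  have Ir: "(\<integral>x. (r x)^2 \<partial>lborel) < \<eta>" using sq unfolding r_def .
  have small: "\<bar>\<integral>x. p x * g x \<partial>lborel\<bar> < \<epsilon> / 3" if "L2 g" "(\<integral>x. (g x)^2 \<partial>lborel) < \<eta>" for g
  proof -
    have "\<bar>\<integral>x. p x * g x \<partial>lborel\<bar> \<le> t / 2 * Np + 1 / (2 * t) * (\<integral>x. (g x)^2 \<partial>lborel)"
      using L2_amgm[OF p that(1) t] unfolding Np_def .
    also have "\<dots> \<le> t / 2 * Np + 1 / (2 * t) * \<eta>"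
      using that(2) t by (intro add_left_mono mult_left_mono) auto
    also have "1 / (2 * t) * \<eta> = \<epsilon> / 12" unfolding \<eta>_def using t by (simp add: field_simps)
    finally show ?thesis using tNp e by linarith
  qed
  have "((\<lambda>h. \<integral>x. p x * (s (x - h) - s x) \<partial>lborel) \<longlongrightarrow> 0) (nhds 0)"
    by (rule simple_part[OF s(1) sS S p])
  then obtain \<delta> where \<delta>: "\<delta> > 0" "\<And>h. norm h < \<delta> \<Longrightarrow> \<bar>\<integral>x. p x * (s (x - h) - s x) \<partial>lborel\<bar> < \<epsilon> / 3"
    unfolding eps_tendsto using e by (meson divide_pos_pos zero_less_numeral)
  show ?thesis
  proof (intro exI[of _ \<delta>] conjI allI impI)
    show "\<delta> > 0" by (rule \<delta>(1))
    fix h :: "real^2" assume h: "norm h < \<delta>"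
    have L2sh: "L2 (\<lambda>x. s (x - h))" by (rule L2_transl(1)[OF L2s])
    have L2rh: "L2 (\<lambda>x. r (x - h))" by (rule L2_transl(1)[OF L2r])
    have L2qh: "L2 (\<lambda>x. q (x - h))" by (rule L2_transl(1)[OF q])
    have Irh: "(\<integral>x. (r (x - h))^2 \<partial>lborel) < \<eta>" using Ir L2_transl(2)[OF L2r, of h] by simp
    have dec: "(\<integral>x. p x * q (x - h) \<partial>lborel) - (\<integral>x. p x * q x \<partial>lborel) =
      (\<integral>x. p x * (s (x - h) - s x) \<partial>lborel) + (\<integral>x. p x * r (x - h) \<partial>lborel) - (\<integral>x. p x * r x \<partial>lborel)"
    proof -
      have i1: "integrable lborel (\<lambda>x. p x * s (x - h))" by (rule L2_prod_integrable[OF p L2sh])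
      have i2: "integrable lborel (\<lambda>x. p x * s x)" by (rule L2_prod_integrable[OF p L2s])
      have i3: "integrable lborel (\<lambda>x. p x * r (x - h))" by (rule L2_prod_integrable[OF p L2rh])
      have i4: "integrable lborel (\<lambda>x. p x * r x)" by (rule L2_prod_integrable[OF p L2r])
      have "(\<integral>x. p x * q (x - h) \<partial>lborel) = (\<integral>x. p x * s (x - h) + p x * r (x - h) \<partial>lborel)"
        unfolding r_def by (simp add: algebra_simps)
      also have "\<dots> = (\<integral>x. p x * s (x - h) \<partial>lborel) + (\<integral>x. p x * r (x - h) \<partial>lborel)"
        using i1 i3 by simp
      finally have e1: "(\<integral>x. p x * q (x - h) \<partial>lborel) = (\<integral>x. p x * s (x - h) \<partial>lborel) + (\<integral>x. p x * r (x - h) \<partial>lborel)" .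
      have "(\<integral>x. p x * q x \<partial>lborel) = (\<integral>x. p x * s x + p x * r x \<partial>lborel)"
        unfolding r_def by (simp add: algebra_simps)
      also have "\<dots> = (\<integral>x. p x * s x \<partial>lborel) + (\<integral>x. p x * r x \<partial>lborel)"
        using i2 i4 by simp
      finally have e2: "(\<integral>x. p x * q x \<partial>lborel) = (\<integral>x. p x * s x \<partial>lborel) + (\<integral>x. p x * r x \<partial>lborel)" .
      have e3: "(\<integral>x. p x * (s (x - h) - s x) \<partial>lborel) = (\<integral>x. p x * s (x - h) \<partial>lborel) - (\<integral>x. p x * s x \<partial>lborel)"
        using i1 i2 by (simp add: right_diff_distrib)
      show ?thesis using e1 e2 e3 by simp
    qed
    have a1: "\<bar>\<integral>x. p x * (s (x - h) - s x) \<partial>lborel\<bar> < \<epsilon> / 3" using \<delta>(2)[OF h] .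
    have a2: "\<bar>\<integral>x. p x * r (x - h) \<partial>lborel\<bar> < \<epsilon> / 3" by (rule small[OF L2rh Irh])
    have a3: "\<bar>\<integral>x. p x * r x \<partial>lborel\<bar> < \<epsilon> / 3" by (rule small[OF L2r Ir])
    show "\<bar>(\<integral>x. p x * q (x - h) \<partial>lborel) - (\<integral>x. p x * q x \<partial>lborel)\<bar> < \<epsilon>"
      unfolding dec using a1 a2 a3 by linarith
  qed
qed

lemma fubini_kernel:
  fixes p q k :: "real^2 \<Rightarrow> real"
  assumes pm[measurable]: "p \<in> borel_measurable borel" and qm[measurable]: "q \<in> borel_measurable borel"
    and km[measurable]: "k \<in> borel_measurable borel"
    and pi: "integrable lborel p" and qi: "integrable lborel q" and kb: "\<And>z. \<bar>k z\<bar> \<le> M"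
  shows "(\<integral>y. q y * (\<integral>x. p x * k (x - y) \<partial>lborel) \<partial>lborel)
       = (\<integral>x. p x * (\<integral>y. q y * k (x - y) \<partial>lborel) \<partial>lborel)"
proof -
  define G where "G x y = p x * q y * k (x - y)" for x y
  have Gm: "(\<lambda>(x, y). G x y) \<in> borel_measurable (lborel \<Otimes>\<^sub>M lborel)"
    unfolding G_def by measurable
  have M0: "M \<ge> 0" using kb[of 0] by linarith
  have int_prod: "integrable (lborel \<Otimes>\<^sub>M lborel) (\<lambda>(x, y). G x y)"
  proof (rule lborel_pair.Fubini_integrable)
    show "(\<lambda>(x, y). G x y) \<in> borel_measurable (lborel \<Otimes>\<^sub>M lborel)" by (rule Gm)
    have qai: "integrable lborel (\<lambda>y. \<bar>q y\<bar>)" using qi by simp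
    have in2: "integrable lborel (\<lambda>y. G x y)" for x
    proof (rule Bochner_Integration.integrable_bound)
      show "integrable lborel (\<lambda>y. \<bar>p x\<bar> * M * \<bar>q y\<bar>)" using qai by simp
      show "(\<lambda>y. G x y) \<in> borel_measurable lborel" unfolding G_def by measurable
      show "AE y in lborel. norm (G x y) \<le> norm (\<bar>p x\<bar> * M * \<bar>q y\<bar>)"
      proof (intro AE_I2)
        fix y
        have "\<bar>p x\<bar> * \<bar>q y\<bar> * \<bar>k (x - y)\<bar> \<le> \<bar>p x\<bar> * \<bar>q y\<bar> * M"
          by (intro mult_left_mono kb) auto
        then show "norm (G x y) \<le> norm (\<bar>p x\<bar> * M * \<bar>q y\<bar>)"
          unfolding G_def using M0 by (simp add: abs_mult algebra_simps)
      qed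
    qed
    then show "AE x in lborel. integrable lborel (\<lambda>y. case (x, y) of (x, y) \<Rightarrow> G x y)" by simp
    show "integrable lborel (\<lambda>x. \<integral>y. norm (case (x, y) of (x, y) \<Rightarrow> G x y) \<partial>lborel)"
    proof (rule Bochner_Integration.integrable_bound)
      show "integrable lborel (\<lambda>x. \<bar>p x\<bar> * (M * (\<integral>y. \<bar>q y\<bar> \<partial>lborel)))" using pi by simp
      show "(\<lambda>x. \<integral>y. norm (case (x, y) of (x, y) \<Rightarrow> G x y) \<partial>lborel) \<in> borel_measurable lborel"
        unfolding G_def by measurable
      show "AE x in lborel. norm (\<integral>y. norm (case (x, y) of (x, y) \<Rightarrow> G x y) \<partial>lborel)
           \<le> norm (\<bar>p x\<bar> * (M * (\<integral>y. \<bar>q y\<bar> \<partial>lborel)))"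
      proof (intro AE_I2)
        fix x
        have "(\<integral>y. norm (G x y) \<partial>lborel) \<le> (\<integral>y. \<bar>p x\<bar> * M * \<bar>q y\<bar> \<partial>lborel)"
        proof (rule integral_mono)
          show "integrable lborel (\<lambda>y. norm (G x y))" using in2[of x] by simp
          show "integrable lborel (\<lambda>y. \<bar>p x\<bar> * M * \<bar>q y\<bar>)" using qai by simp
          fix y
          have "\<bar>p x\<bar> * \<bar>q y\<bar> * \<bar>k (x - y)\<bar> \<le> \<bar>p x\<bar> * \<bar>q y\<bar> * M"
            by (intro mult_left_mono kb) auto
          then show "norm (G x y) \<le> \<bar>p x\<bar> * M * \<bar>q y\<bar>"
            unfolding G_def by (simp add: abs_mult algebra_simps)
        qed
        also have "\<dots> = \<bar>p x\<bar> * (M * (\<integral>y. \<bar>q y\<bar> \<partial>lborel))" by simp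
        finally have "(\<integral>y. norm (G x y) \<partial>lborel) \<le> \<bar>p x\<bar> * (M * (\<integral>y. \<bar>q y\<bar> \<partial>lborel))" .
        moreover have "(\<integral>y. norm (G x y) \<partial>lborel) \<ge> 0" by (rule integral_nonneg_AE) simp
        moreover have "(\<integral>y. \<bar>q y\<bar> \<partial>lborel) \<ge> 0" by (rule integral_nonneg_AE) simp
        ultimately show "norm (\<integral>y. norm (case (x, y) of (x, y) \<Rightarrow> G x y) \<partial>lborel)
           \<le> norm (\<bar>p x\<bar> * (M * (\<integral>y. \<bar>q y\<bar> \<partial>lborel)))"
          using M0 by simp
      qed
    qed
  qed
  have "(\<integral>y. (\<integral>x. G x y \<partial>lborel) \<partial>lborel) = (\<integral>x. (\<integral>y. G x y \<partial>lborel) \<partial>lborel)"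
    by (rule lborel_pair.Fubini_integral[OF int_prod])
  moreover have "(\<integral>x. G x y \<partial>lborel) = q y * (\<integral>x. p x * k (x - y) \<partial>lborel)" for y
  proof -
    have "(\<integral>x. G x y \<partial>lborel) = (\<integral>x. q y * (p x * k (x - y)) \<partial>lborel)"
      unfolding G_def by (simp add: algebra_simps)
    then show ?thesis by simp
  qed
  moreover have "(\<integral>y. G x y \<partial>lborel) = p x * (\<integral>y. q y * k (x - y) \<partial>lborel)" for x
  proof -
    have "(\<integral>y. G x y \<partial>lborel) = (\<integral>y. p x * (q y * k (x - y)) \<partial>lborel)"
      unfolding G_def by (simp add: algebra_simps)
    then show ?thesis by simp
  qed
  ultimately show ?thesis by simp
qed

lemma kernel_estimate:
  fixes p q \<rho> :: "real^2 \<Rightarrow> real"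
  assumes p: "L2 p" and q: "L2 q" and pi: "integrable lborel p" and qi: "integrable lborel q"
    and rm[measurable]: "\<rho> \<in> borel_measurable borel" and r0: "\<And>z. 0 \<le> \<rho> z" and rM: "\<And>z. \<rho> z \<le> M"
    and ri: "integrable lborel \<rho>"
    and close: "\<And>h. \<rho> h \<noteq> 0 \<Longrightarrow>
        \<bar>(\<integral>x. p x * q (x - h) \<partial>lborel) - (\<integral>x. p x * q x \<partial>lborel)\<bar> \<le> \<epsilon>"
  shows "\<bar>(\<integral>x. p x * (\<integral>y. q y * \<rho> (x - y) \<partial>lborel) \<partial>lborel)
          - (\<integral>h. \<rho> h \<partial>lborel) * (\<integral>x. p x * q x \<partial>lborel)\<bar> \<le> (\<integral>h. \<rho> h \<partial>lborel) * \<epsilon>"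
proof -
  have pm[measurable]: "p \<in> borel_measurable borel" using p by (simp add: L2_def)
  have qm[measurable]: "q \<in> borel_measurable borel" using q by (simp add: L2_def)
  define P where "P h = (\<integral>x. p x * q (x - h) \<partial>lborel)" for h
  define G where "G x h = p x * q (x - h) * \<rho> h" for x h
  have M0: "M \<ge> 0" using r0[of 0] rM[of 0] by linarith
  have Gm: "(\<lambda>(x, h). G x h) \<in> borel_measurable (lborel \<Otimes>\<^sub>M lborel)"
    unfolding G_def by measurable
  have qai: "integrable lborel (\<lambda>y. \<bar>q y\<bar>)" using qi by simp
  have qam: "(\<lambda>y. \<bar>q y\<bar>) \<in> borel_measurable borel" by measurable
  have qshift: "integrable lborel (\<lambda>h. \<bar>q (x - h)\<bar>)" for x
    using integrable_refl[OF qam, of x] qai by simp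
  have qshift_int: "(\<integral>h. \<bar>q (x - h)\<bar> \<partial>lborel) = (\<integral>y. \<bar>q y\<bar> \<partial>lborel)" for x
    using integral_refl[OF qam, of x] by simp
  have bnd: "\<bar>G x h\<bar> \<le> \<bar>p x\<bar> * M * \<bar>q (x - h)\<bar>" for x h
  proof -
    have "\<bar>p x\<bar> * \<bar>q (x - h)\<bar> * \<bar>\<rho> h\<bar> \<le> \<bar>p x\<bar> * \<bar>q (x - h)\<bar> * M"
      using r0[of h] rM[of h] by (intro mult_left_mono) auto
    then show ?thesis unfolding G_def by (simp add: abs_mult algebra_simps)
  qed
  have in2: "integrable lborel (\<lambda>h. G x h)" for x
  proof (rule Bochner_Integration.integrable_bound)
    show "integrable lborel (\<lambda>h. \<bar>p x\<bar> * M * \<bar>q (x - h)\<bar>)" using qshift[of x] by simp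
    show "(\<lambda>h. G x h) \<in> borel_measurable lborel" unfolding G_def by measurable
    show "AE h in lborel. norm (G x h) \<le> norm (\<bar>p x\<bar> * M * \<bar>q (x - h)\<bar>)"
      using bnd M0 by (intro AE_I2) (simp add: abs_mult)
  qed
  have int_prod: "integrable (lborel \<Otimes>\<^sub>M lborel) (\<lambda>(x, h). G x h)"
  proof (rule lborel_pair.Fubini_integrable)
    show "(\<lambda>(x, h). G x h) \<in> borel_measurable (lborel \<Otimes>\<^sub>M lborel)" by (rule Gm)
    show "AE x in lborel. integrable lborel (\<lambda>h. case (x, h) of (x, h) \<Rightarrow> G x h)"
      using in2 by simp
    show "integrable lborel (\<lambda>x. \<integral>h. norm (case (x, h) of (x, h) \<Rightarrow> G x h) \<partial>lborel)"
    proof (rule Bochner_Integration.integrable_bound)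
      show "integrable lborel (\<lambda>x. \<bar>p x\<bar> * (M * (\<integral>y. \<bar>q y\<bar> \<partial>lborel)))" using pi by simp
      show "(\<lambda>x. \<integral>h. norm (case (x, h) of (x, h) \<Rightarrow> G x h) \<partial>lborel) \<in> borel_measurable lborel"
        unfolding G_def by measurable
      show "AE x in lborel. norm (\<integral>h. norm (case (x, h) of (x, h) \<Rightarrow> G x h) \<partial>lborel)
           \<le> norm (\<bar>p x\<bar> * (M * (\<integral>y. \<bar>q y\<bar> \<partial>lborel)))"
      proof (intro AE_I2)
        fix x
        have "(\<integral>h. norm (G x h) \<partial>lborel) \<le> (\<integral>h. \<bar>p x\<bar> * M * \<bar>q (x - h)\<bar> \<partial>lborel)"
        proof (rule integral_mono)
          show "integrable lborel (\<lambda>h. norm (G x h))" using in2[of x] by simp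
          show "integrable lborel (\<lambda>h. \<bar>p x\<bar> * M * \<bar>q (x - h)\<bar>)" using qshift[of x] by simp
          show "norm (G x h) \<le> \<bar>p x\<bar> * M * \<bar>q (x - h)\<bar>" for h using bnd[of x h] by simp
        qed
        also have "\<dots> = \<bar>p x\<bar> * (M * (\<integral>y. \<bar>q y\<bar> \<partial>lborel))" using qshift_int[of x] by simp
        finally have "(\<integral>h. norm (G x h) \<partial>lborel) \<le> \<bar>p x\<bar> * (M * (\<integral>y. \<bar>q y\<bar> \<partial>lborel))" .
        moreover have "(\<integral>h. norm (G x h) \<partial>lborel) \<ge> 0" by (rule integral_nonneg_AE) simp
        moreover have "(\<integral>y. \<bar>q y\<bar> \<partial>lborel) \<ge> 0" by (rule integral_nonneg_AE) simp
        ultimately show "norm (\<integral>h. norm (case (x, h) of (x, h) \<Rightarrow> G x h) \<partial>lborel)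
           \<le> norm (\<bar>p x\<bar> * (M * (\<integral>y. \<bar>q y\<bar> \<partial>lborel)))"
          using M0 by simp
      qed
    qed
  qed
  have inner: "(\<integral>y. q y * \<rho> (x - y) \<partial>lborel) = (\<integral>h. q (x - h) * \<rho> h \<partial>lborel)" for x
  proof -
    have fm: "(\<lambda>h. q (x - h) * \<rho> h) \<in> borel_measurable borel" by measurable
    from integral_refl[OF fm, of x] show ?thesis by simp
  qed
  have J: "(\<integral>x. p x * (\<integral>y. q y * \<rho> (x - y) \<partial>lborel) \<partial>lborel) = (\<integral>x. (\<integral>h. G x h \<partial>lborel) \<partial>lborel)"
  proof -
    have "p x * (\<integral>y. q y * \<rho> (x - y) \<partial>lborel) = (\<integral>h. G x h \<partial>lborel)" for x
    proof -
      have "(\<integral>h. G x h \<partial>lborel) = (\<integral>h. p x * (q (x - h) * \<rho> h) \<partial>lborel)"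
        unfolding G_def by (simp add: algebra_simps)
      then show ?thesis using inner[of x] by simp
    qed
    then show ?thesis by simp
  qed
  also have "\<dots> = (\<integral>h. (\<integral>x. G x h \<partial>lborel) \<partial>lborel)"
    by (rule lborel_pair.Fubini_integral[OF int_prod, symmetric])
  also have "\<dots> = (\<integral>h. \<rho> h * P h \<partial>lborel)"
  proof -
    have "(\<integral>x. G x h \<partial>lborel) = \<rho> h * P h" for h
    proof -
      have "(\<integral>x. G x h \<partial>lborel) = (\<integral>x. \<rho> h * (p x * q (x - h)) \<partial>lborel)"
        unfolding G_def by (simp add: algebra_simps)
      then show ?thesis unfolding P_def by simp
    qed
    then show ?thesis by simp
  qed
  finally have J2: "(\<integral>x. p x * (\<integral>y. q y * \<rho> (x - y) \<partial>lborel) \<partial>lborel) = (\<integral>h. \<rho> h * P h \<partial>lborel)" .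
  have iRP: "integrable lborel (\<lambda>h. \<rho> h * P h)"
  proof -
    have "integrable lborel (\<lambda>h. \<integral>x. G x h \<partial>lborel)"
      by (rule lborel_pair.integrable_snd[OF int_prod])
    moreover have "(\<integral>x. G x h \<partial>lborel) = \<rho> h * P h" for h
    proof -
      have "(\<integral>x. G x h \<partial>lborel) = (\<integral>x. \<rho> h * (p x * q (x - h)) \<partial>lborel)"
        unfolding G_def by (simp add: algebra_simps)
      then show ?thesis unfolding P_def by simp
    qed
    ultimately show ?thesis by simp
  qed
  have iR0: "integrable lborel (\<lambda>h. \<rho> h * P 0)" using ri by simp
  have P0: "P 0 = (\<integral>x. p x * q x \<partial>lborel)" unfolding P_def by simp
  have "(\<integral>h. \<rho> h * P h \<partial>lborel) - (\<integral>h. \<rho> h \<partial>lborel) * P 0 = (\<integral>h. \<rho> h * (P h - P 0) \<partial>lborel)"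
    using iRP iR0 by (simp add: right_diff_distrib)
  also have "\<bar>\<dots>\<bar> \<le> (\<integral>h. \<bar>\<rho> h * (P h - P 0)\<bar> \<partial>lborel)" by (rule integral_abs_bound)
  also have "\<dots> \<le> (\<integral>h. \<rho> h * \<epsilon> \<partial>lborel)"
  proof (rule integral_mono)
    show "integrable lborel (\<lambda>h. \<bar>\<rho> h * (P h - P 0)\<bar>)"
      using iRP iR0 by (simp add: right_diff_distrib)
    show "integrable lborel (\<lambda>h. \<rho> h * \<epsilon>)" using ri by simp
    fix h
    show "\<bar>\<rho> h * (P h - P 0)\<bar> \<le> \<rho> h * \<epsilon>"
    proof (cases "\<rho> h = 0")
      case True then show ?thesis by simp
    next
      case False
      then have "\<bar>P h - P 0\<bar> \<le> \<epsilon>" using close[OF False] P0 unfolding P_def by simp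
      then show ?thesis using r0[of h] by (simp add: abs_mult mult_left_mono)
    qed
  qed
  also have "\<dots> = (\<integral>h. \<rho> h \<partial>lborel) * \<epsilon>" by simp
  finally show ?thesis using J2 P0 by simp
qed

definition Phil :: "real \<Rightarrow> real \<Rightarrow> real" where "Phil l t = l * bPhi (t / l)"
definition phil :: "real \<Rightarrow> real \<Rightarrow> real" where "phil l t = bphi (t / l)"
definition dphil :: "real \<Rightarrow> real \<Rightarrow> real" where "dphil l t = bdphi (t / l) / l"

lemma Phil_deriv: "l > 0 \<Longrightarrow> (Phil l has_real_derivative phil l t) (at t)"
proof -
  assume l: "l > 0"
  have d: "((\<lambda>t. t / l) has_real_derivative 1 / l) (at t)" using l by (auto intro!: derivative_eq_intros)
  have "((\<lambda>t. bPhi (t / l)) has_real_derivative bphi (t / l) * (1 / l)) (at t)"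
    by (rule DERIV_chain2[OF bPhi_deriv d])
  then have "((\<lambda>t. l * bPhi (t / l)) has_real_derivative l * (bphi (t / l) * (1 / l))) (at t)"
    by (rule DERIV_cmult)
  then show ?thesis unfolding Phil_def[abs_def] phil_def using l by simp
qed

lemma phil_deriv: "l > 0 \<Longrightarrow> (phil l has_real_derivative dphil l t) (at t)"
proof -
  assume l: "l > 0"
  have d: "((\<lambda>t. t / l) has_real_derivative 1 / l) (at t)" using l by (auto intro!: derivative_eq_intros)
  have "((\<lambda>t. bphi (t / l)) has_real_derivative bdphi (t / l) * (1 / l)) (at t)"
    by (rule DERIV_chain2[OF bphi_deriv d])
  then show ?thesis unfolding phil_def[abs_def] dphil_def by simp
qed

lemma phil_cont: "l > 0 \<Longrightarrow> continuous_on UNIV (phil l)"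
proof -
  assume l: "l > 0"
  have "continuous_on UNIV (\<lambda>t. bphi (t / l))"
    by (rule continuous_on_compose2[OF bphi_cont]) (use l in \<open>auto intro!: continuous_intros\<close>)
  then show ?thesis unfolding phil_def[abs_def] .
qed

lemma dphil_cont: "l > 0 \<Longrightarrow> continuous_on UNIV (dphil l)"
proof -
  assume l: "l > 0"
  have "continuous_on UNIV (\<lambda>t. bdphi (t / l))"
    by (rule continuous_on_compose2[OF bdphi_cont]) (use l in \<open>auto intro!: continuous_intros\<close>)
  then have "continuous_on UNIV (\<lambda>t. bdphi (t / l) / l)" using l by (intro continuous_intros) auto
  then show ?thesis unfolding dphil_def[abs_def] .
qed

lemma Phil_cont: "l > 0 \<Longrightarrow> continuous_on UNIV (Phil l)"
  using Phil_deriv by (meson DERIV_isCont continuous_at_imp_continuous_on)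

lemma Phil_bound: "l > 0 \<Longrightarrow> \<bar>Phil l t\<bar> \<le> 216 * l"
  unfolding Phil_def using bPhi_bound[of "t / l"] by (simp add: abs_mult)
lemma phil_bound: "\<bar>phil l t\<bar> \<le> 216"
  unfolding phil_def using bphi_bound .
lemma dphil_bound: "l > 0 \<Longrightarrow> \<bar>dphil l t\<bar> \<le> 216 / l"
  unfolding dphil_def using bdphi_bound[of "t / l"] by (simp add: divide_right_mono)

definition rhol :: "real \<Rightarrow> real^2 \<Rightarrow> real" where "rhol l z = phil l (z$1) * phil l (z$2)"
definition k1l :: "real \<Rightarrow> real^2 \<Rightarrow> real" where "k1l l z = Phil l (z$1) * dphil l (z$2)"
definition k2l :: "real \<Rightarrow> real^2 \<Rightarrow> real" where "k2l l z = dphil l (z$1) * Phil l (z$2)"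

lemma cont_comp_nth: "continuous_on UNIV g \<Longrightarrow> continuous_on UNIV (\<lambda>z::real^2. g (z$i))"
  by (rule continuous_on_compose2[of UNIV g]) (auto intro!: continuous_intros)

lemma rhol_meas: "l > 0 \<Longrightarrow> rhol l \<in> borel_measurable borel"
  unfolding rhol_def[abs_def]
  by (intro borel_measurable_continuous_onI continuous_intros cont_comp_nth phil_cont)
lemma k1l_meas: "l > 0 \<Longrightarrow> k1l l \<in> borel_measurable borel"
  unfolding k1l_def[abs_def]
  by (intro borel_measurable_continuous_onI continuous_intros cont_comp_nth dphil_cont Phil_cont)
lemma k2l_meas: "l > 0 \<Longrightarrow> k2l l \<in> borel_measurable borel"
  unfolding k2l_def[abs_def]
  by (intro borel_measurable_continuous_onI continuous_intros cont_comp_nth dphil_cont Phil_cont)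

lemma rhol_bound: "\<bar>rhol l z\<bar> \<le> 216 * 216"
  unfolding rhol_def abs_mult using phil_bound[of l] by (intro mult_mono) auto
lemma k1l_bound: "l > 0 \<Longrightarrow> \<bar>k1l l z\<bar> \<le> 216 * l * (216 / l)"
  unfolding k1l_def abs_mult using Phil_bound[of l] dphil_bound[of l] by (intro mult_mono) auto
lemma k2l_bound: "l > 0 \<Longrightarrow> \<bar>k2l l z\<bar> \<le> (216 / l) * (216 * l)"
  unfolding k2l_def abs_mult using Phil_bound[of l] dphil_bound[of l] by (intro mult_mono) auto

lemma rhol_nonneg: "rhol l z \<ge> 0"
  unfolding rhol_def phil_def using bphi_nonneg by simp

lemma rhol_supp:
  assumes l: "l > 0" and ne: "rhol l z \<noteq> 0"
  shows "norm z < 6 * l"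
proof -
  have "bphi (z$1 / l) \<noteq> 0" "bphi (z$2 / l) \<noteq> 0" using ne unfolding rhol_def phil_def by auto
  then have a: "0 < z$1 / l \<and> z$1 / l < 3" "0 < z$2 / l \<and> z$2 / l < 3" using bphi_supp by auto
  then have "\<bar>z$1\<bar> < 3 * l" "\<bar>z$2\<bar> < 3 * l" using l by (auto simp: field_simps)
  moreover have "norm z \<le> \<bar>z$1\<bar> + \<bar>z$2\<bar>" using norm_le_l1_cart[of z] by (simp add: sum_2)
  ultimately show ?thesis by linarith
qed

lemma rhol_integrable:
  assumes l: "l > 0"
  shows "integrable lborel (rhol l)"
proof (rule Bochner_Integration.integrable_bound)
  show "integrable lborel (\<lambda>z. (216 * 216) * indicator (cball (0::real^2) (6 * l)) z :: real)"
    using emeasure_bounded_finite[of "cball (0::real^2) (6 * l)"] by simp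
  show "rhol l \<in> borel_measurable lborel" using rhol_meas[OF l] by simp
  show "AE z in lborel. norm (rhol l z) \<le> norm ((216 * 216) * indicator (cball (0::real^2) (6 * l)) z :: real)"
  proof (intro AE_I2)
    fix z :: "real^2"
    show "norm (rhol l z) \<le> norm ((216 * 216) * indicator (cball (0::real^2) (6 * l)) z :: real)"
    proof (cases "rhol l z = 0")
      case True then show ?thesis by simp
    next
      case False
      then have "z \<in> cball 0 (6 * l)" using rhol_supp[OF l False] by simp
      then show ?thesis using rhol_bound[of l z] by simp
    qed
  qed
qed

lemma rhol_pos:
  assumes l: "l > 0"
  shows "(\<integral>z. rhol l z \<partial>lborel) > 0"
proof -
  define a :: "real^2" where "a = (\<chi> i. l)"
  define b :: "real^2" where "b = (\<chi> i. 2 * l)"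
  have ge: "rhol l z \<ge> 9 * indicator (cbox a b) z" for z
  proof (cases "z \<in> cbox a b")
    case True
    then have "l \<le> z$i \<and> z$i \<le> 2 * l" for i unfolding a_def b_def mem_box_cart by auto
    then have "1 \<le> z$i / l \<and> z$i / l \<le> 2" for i using l by (auto simp: field_simps)
    then have "bphi (z$1 / l) \<ge> 3" "bphi (z$2 / l) \<ge> 3" using bphi_lower by auto
    then have "bphi (z$1 / l) * bphi (z$2 / l) \<ge> 3 * 3" by (intro mult_mono) auto
    then show ?thesis using True unfolding rhol_def phil_def by simp
  next
    case False then show ?thesis using rhol_nonneg[of l z] by simp
  qed
  have mb: "measure lborel (cbox a b) > 0"
  proof -
    have "\<forall>c\<in>Basis. a \<bullet> c \<le> b \<bullet> c" "\<forall>c\<in>Basis. (b - a) \<bullet> c > 0"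
      unfolding a_def b_def using l by (auto simp: Basis_vec_def inner_axis)
    then show ?thesis unfolding measure_lborel_cbox_eq by (simp add: prod_pos)
  qed
  have "(\<integral>z. 9 * indicator (cbox a b) z \<partial>lborel) \<le> (\<integral>z. rhol l z \<partial>lborel)"
    by (rule integral_mono) (use rhol_integrable[OF l] ge emeasure_bounded_finite[of "cbox a b"] in auto)
  moreover have "(\<integral>z. 9 * indicator (cbox a b) z \<partial>lborel) = 9 * measure lborel (cbox a b)" by simp
  ultimately show ?thesis using mb by linarith
qed

definition Jint :: "(real^2 \<Rightarrow> real) \<Rightarrow> (real^2 \<Rightarrow> real) \<Rightarrow> (real^2 \<Rightarrow> real) \<Rightarrow> real" where
  "Jint p q k = (\<integral>x. p x * (\<integral>y. q y * k (x - y) \<partial>lborel) \<partial>lborel)"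

lemma int_mult_kernel:
  fixes p k :: "real^2 \<Rightarrow> real"
  assumes pi: "integrable lborel p" and km[measurable]: "k \<in> borel_measurable borel"
    and kb: "\<And>z. \<bar>k z\<bar> \<le> M"
  shows "integrable lborel (\<lambda>x. p x * k (x - c))" "integrable lborel (\<lambda>x. p x * k (c - x))"
proof -
  have pm[measurable]: "p \<in> borel_measurable lborel" using pi by auto
  have b: "\<bar>p x * k z\<bar> \<le> \<bar>p x\<bar> * M" for x z
    unfolding abs_mult by (intro mult_left_mono kb) auto
  show "integrable lborel (\<lambda>x. p x * k (x - c))"
  proof (rule Bochner_Integration.integrable_bound)
    show "integrable lborel (\<lambda>x. \<bar>p x\<bar> * M)" using pi by simp
    show "(\<lambda>x. p x * k (x - c)) \<in> borel_measurable lborel" by measurable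
    show "AE x in lborel. norm (p x * k (x - c)) \<le> norm (\<bar>p x\<bar> * M)"
      using b by (intro AE_I2) (metis abs_ge_self order_trans real_norm_def)
  qed
  show "integrable lborel (\<lambda>x. p x * k (c - x))"
  proof (rule Bochner_Integration.integrable_bound)
    show "integrable lborel (\<lambda>x. \<bar>p x\<bar> * M)" using pi by simp
    show "(\<lambda>x. p x * k (c - x)) \<in> borel_measurable lborel" by measurable
    show "AE x in lborel. norm (p x * k (c - x)) \<le> norm (\<bar>p x\<bar> * M)"
      using b by (intro AE_I2) (metis abs_ge_self order_trans real_norm_def)
  qed
qed

lemma core_identity:
  fixes f g :: "2 \<Rightarrow> 2 \<Rightarrow> real^2 \<Rightarrow> real"
  assumes Wf: "\<And>v Dv. C1_field v Dv \<Longrightarrow>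
      (\<integral>x. (\<Sum>i\<in>UNIV. \<Sum>j\<in>UNIV. f i j x * (Dv x (axis j 1) $ i)) \<partial>lborel) = 0"
    and Wg: "\<And>v Dv. C1_field v Dv \<Longrightarrow>
      (\<integral>x. (\<Sum>i\<in>UNIV. \<Sum>j\<in>UNIV. g i j x * (Dv x (axis j 1) $ i)) \<partial>lborel) = 0"
    and fm: "\<And>i j. f i j \<in> borel_measurable borel" and gm: "\<And>i j. g i j \<in> borel_measurable borel"
    and fi: "\<And>i j. integrable lborel (f i j)" and gi: "\<And>i j. integrable lborel (g i j)"
    and l: "l > 0"
  shows "Jint (f 1 1) (g 2 2) (rhol l) = Jint (f 1 2) (g 2 1) (rhol l)"
    and "Jint (f 2 2) (g 1 1) (rhol l) = Jint (f 2 1) (g 1 2) (rhol l)"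
proof -
  note dP = Phil_deriv[OF l] and dp = phil_deriv[OF l]
  note cp = phil_cont[OF l] and cdp = dphil_cont[OF l]
  have rb: "\<And>z. \<bar>rhol l z\<bar> \<le> 216 * 216" by (rule rhol_bound)
  have k1b: "\<And>z. \<bar>k1l l z\<bar> \<le> 216 * l * (216 / l)" by (rule k1l_bound[OF l])
  have k2b: "\<And>z. \<bar>k2l l z\<bar> \<le> (216 / l) * (216 * l)" by (rule k2l_bound[OF l])
  note rm = rhol_meas[OF l] and k1m = k1l_meas[OF l] and k2m = k2l_meas[OF l]
  have I1: "(\<integral>x. f 1 2 x * k1l l (x - y) \<partial>lborel) = - (\<integral>x. f 1 1 x * rhol l (x - y) \<partial>lborel)" for y
  proof -
    have "(\<integral>x. f 1 1 x * (1 * phil l (1 * (x$1 - y$1)) * phil l (1 * (x$2 - y$2)))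
              + f 1 2 x * (1 * Phil l (1 * (x$1 - y$1)) * dphil l (1 * (x$2 - y$2))) \<partial>lborel) = 0"
      by (rule weak_kernel[OF Wf dP dp cp cdp])
    then have "(\<integral>x. f 1 1 x * rhol l (x - y) + f 1 2 x * k1l l (x - y) \<partial>lborel) = 0"
      by (simp add: rhol_def k1l_def)
    then have "(\<integral>x. f 1 1 x * rhol l (x - y) \<partial>lborel) + (\<integral>x. f 1 2 x * k1l l (x - y) \<partial>lborel) = 0"
      using int_mult_kernel(1)[OF fi rm rb] int_mult_kernel(1)[OF fi k1m k1b] by simp
    then show ?thesis by linarith
  qed
  have I2: "(\<integral>y. g 2 1 y * rhol l (x - y) \<partial>lborel) = - (\<integral>y. g 2 2 y * k1l l (x - y) \<partial>lborel)" for x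
  proof -
    have "(\<integral>y. g 2 1 y * (-1 * phil l (-1 * (y$1 - x$1)) * phil l (-1 * (y$2 - x$2)))
              + g 2 2 y * (-1 * Phil l (-1 * (y$1 - x$1)) * dphil l (-1 * (y$2 - x$2))) \<partial>lborel) = 0"
      by (rule weak_kernel[OF Wg dP dp cp cdp])
    then have "(\<integral>y. - (g 2 1 y * rhol l (x - y)) - g 2 2 y * k1l l (x - y) \<partial>lborel) = 0"
      by (simp add: rhol_def k1l_def)
    then have "- (\<integral>y. g 2 1 y * rhol l (x - y) \<partial>lborel) - (\<integral>y. g 2 2 y * k1l l (x - y) \<partial>lborel) = 0"
      using int_mult_kernel(2)[OF gi rm rb] int_mult_kernel(2)[OF gi k1m k1b] by simp
    then show ?thesis by linarith
  qed
  have I3: "(\<integral>x. f 2 1 x * k2l l (x - y) \<partial>lborel) = - (\<integral>x. f 2 2 x * rhol l (x - y) \<partial>lborel)" for y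
  proof -
    have "(\<integral>x. f 2 1 x * (1 * dphil l (1 * (x$1 - y$1)) * Phil l (1 * (x$2 - y$2)))
              + f 2 2 x * (1 * phil l (1 * (x$1 - y$1)) * phil l (1 * (x$2 - y$2))) \<partial>lborel) = 0"
      by (rule weak_kernel[OF Wf dp dP cdp cp])
    then have "(\<integral>x. f 2 1 x * k2l l (x - y) + f 2 2 x * rhol l (x - y) \<partial>lborel) = 0"
      by (simp add: rhol_def k2l_def)
    then have "(\<integral>x. f 2 1 x * k2l l (x - y) \<partial>lborel) + (\<integral>x. f 2 2 x * rhol l (x - y) \<partial>lborel) = 0"
      using int_mult_kernel(1)[OF fi rm rb] int_mult_kernel(1)[OF fi k2m k2b] by simp
    then show ?thesis by linarith
  qed
  have I4: "(\<integral>y. g 1 2 y * rhol l (x - y) \<partial>lborel) = - (\<integral>y. g 1 1 y * k2l l (x - y) \<partial>lborel)" for x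
  proof -
    have "(\<integral>y. g 1 1 y * (-1 * dphil l (-1 * (y$1 - x$1)) * Phil l (-1 * (y$2 - x$2)))
              + g 1 2 y * (-1 * phil l (-1 * (y$1 - x$1)) * phil l (-1 * (y$2 - x$2))) \<partial>lborel) = 0"
      by (rule weak_kernel[OF Wg dp dP cdp cp])
    then have "(\<integral>y. - (g 1 1 y * k2l l (x - y)) - g 1 2 y * rhol l (x - y) \<partial>lborel) = 0"
      by (simp add: rhol_def k2l_def)
    then have "- (\<integral>y. g 1 1 y * k2l l (x - y) \<partial>lborel) - (\<integral>y. g 1 2 y * rhol l (x - y) \<partial>lborel) = 0"
      using int_mult_kernel(2)[OF gi rm rb] int_mult_kernel(2)[OF gi k2m k2b] by simp
    then show ?thesis by linarith
  qed
  have F1: "(\<integral>y. g 2 2 y * (\<integral>x. f 1 2 x * k1l l (x - y) \<partial>lborel) \<partial>lborel) = Jint (f 1 2) (g 2 2) (k1l l)"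
    unfolding Jint_def by (rule fubini_kernel[OF fm gm k1m fi gi k1b])
  have F2: "(\<integral>y. g 2 2 y * (\<integral>x. f 1 1 x * rhol l (x - y) \<partial>lborel) \<partial>lborel) = Jint (f 1 1) (g 2 2) (rhol l)"
    unfolding Jint_def by (rule fubini_kernel[OF fm gm rm fi gi rb])
  have F3: "(\<integral>y. g 1 1 y * (\<integral>x. f 2 1 x * k2l l (x - y) \<partial>lborel) \<partial>lborel) = Jint (f 2 1) (g 1 1) (k2l l)"
    unfolding Jint_def by (rule fubini_kernel[OF fm gm k2m fi gi k2b])
  have F4: "(\<integral>y. g 1 1 y * (\<integral>x. f 2 2 x * rhol l (x - y) \<partial>lborel) \<partial>lborel) = Jint (f 2 2) (g 1 1) (rhol l)"
    unfolding Jint_def by (rule fubini_kernel[OF fm gm rm fi gi rb])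
  show "Jint (f 1 1) (g 2 2) (rhol l) = Jint (f 1 2) (g 2 1) (rhol l)"
  proof -
    have "Jint (f 1 2) (g 2 1) (rhol l) = (\<integral>x. - (f 1 2 x * (\<integral>y. g 2 2 y * k1l l (x - y) \<partial>lborel)) \<partial>lborel)"
      unfolding Jint_def I2 by simp
    also have "\<dots> = - Jint (f 1 2) (g 2 2) (k1l l)" unfolding Jint_def by (rule integral_minus)
    also have "\<dots> = - (\<integral>y. g 2 2 y * (\<integral>x. f 1 2 x * k1l l (x - y) \<partial>lborel) \<partial>lborel)" using F1 by simp
    also have "\<dots> = - (\<integral>y. - (g 2 2 y * (\<integral>x. f 1 1 x * rhol l (x - y) \<partial>lborel)) \<partial>lborel)"
      unfolding I1 by simp
    also have "\<dots> = Jint (f 1 1) (g 2 2) (rhol l)" using F2 by (simp add: integral_minus)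
    finally show ?thesis by simp
  qed
  show "Jint (f 2 2) (g 1 1) (rhol l) = Jint (f 2 1) (g 1 2) (rhol l)"
  proof -
    have "Jint (f 2 1) (g 1 2) (rhol l) = (\<integral>x. - (f 2 1 x * (\<integral>y. g 1 1 y * k2l l (x - y) \<partial>lborel)) \<partial>lborel)"
      unfolding Jint_def I4 by simp
    also have "\<dots> = - Jint (f 2 1) (g 1 1) (k2l l)" unfolding Jint_def by (rule integral_minus)
    also have "\<dots> = - (\<integral>y. g 1 1 y * (\<integral>x. f 2 1 x * k2l l (x - y) \<partial>lborel) \<partial>lborel)" using F3 by simp
    also have "\<dots> = - (\<integral>y. - (g 1 1 y * (\<integral>x. f 2 2 x * rhol l (x - y) \<partial>lborel)) \<partial>lborel)"
      unfolding I3 by simp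
    also have "\<dots> = Jint (f 2 2) (g 1 1) (rhol l)" using F4 by (simp add: integral_minus)
    finally show ?thesis by simp
  qed
qed

lemma AE_all_2:
  fixes P :: "2 \<Rightarrow> 2 \<Rightarrow> 'a \<Rightarrow> bool"
  assumes "\<And>i j. AE x in M. P i j x"
  shows "AE x in M. \<forall>i j::2. P i j x"
  using assms[of 1 1] assms[of 1 2] assms[of 2 1] assms[of 2 2]
  by eventually_elim (simp add: forall_2)

lemma residual_conv:
  fixes \<Omega> :: "(real^2) set" and \<sigma> :: "real^2 \<Rightarrow> real^2^2"
  assumes rs: "residual_stress \<Omega> \<sigma>" and \<Omega>o: "open \<Omega>" and \<Omega>b: "bounded \<Omega>" and R: "\<Omega> \<subseteq> cball 0 R"
  obtains f where "\<And>i j. f i j \<in> borel_measurable borel"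
    "\<And>i j. AE x in lborel. indicator \<Omega> x * \<sigma> x $ i $ j = f i j x"
    "\<And>i j x. x \<notin> cball 0 R \<Longrightarrow> f i j x = 0"
    "\<And>i j. integrable lborel (f i j)" "\<And>i j. L2 (f i j)"
    "\<And>v Dv. C1_field v Dv \<Longrightarrow>
       (\<integral>x. (\<Sum>i\<in>UNIV. \<Sum>j\<in>UNIV. f i j x * (Dv x (axis j 1) $ i)) \<partial>lborel) = 0"
proof -
  have meas: "\<And>i j. set_borel_measurable lebesgue \<Omega> (\<lambda>x. \<sigma> x $ i $ j)"
    and sq: "\<And>i j. set_integrable lebesgue \<Omega> (\<lambda>x. (\<sigma> x $ i $ j)\<^sup>2)"
    and weak: "\<And>v Dv. C1_field v Dv \<Longrightarrow>
        (LINT x:\<Omega>|lebesgue. (\<Sum>i\<in>UNIV. \<Sum>j\<in>UNIV. \<sigma> x $ i $ j * (Dv x (axis j 1) $ i))) = 0"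
    using rs unfolding residual_stress_def by auto
  define e where "e i j x = indicator \<Omega> x * \<sigma> x $ i $ j" for i j x
  have em[measurable]: "e i j \<in> borel_measurable lebesgue" for i j
    using meas[of i j] unfolding set_borel_measurable_def e_def[abs_def] by simp
  have "\<forall>ij. \<exists>g\<in>borel_measurable lborel. AE x in lborel. e (fst ij) (snd ij) x = g x"
    using completion_ex_borel_measurable_real[OF em] by blast
  then obtain G where Gm: "\<And>ij. G ij \<in> borel_measurable lborel"
    and Gae: "\<And>ij. AE x in lborel. e (fst ij) (snd ij) x = G ij x"
    by metis
  define f where "f i j x = indicator (cball (0::real^2) R) x * G (i, j) x" for i j x
  have fm: "f i j \<in> borel_measurable borel" for i j
  proof -
    have "cball (0::real^2) R \<in> sets borel" by simp
    then have "(indicator (cball (0::real^2) R) :: real^2 \<Rightarrow> real) \<in> borel_measurable borel"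
      by (rule borel_measurable_indicator)
    moreover have "G (i, j) \<in> borel_measurable borel" using Gm[of "(i,j)"] by simp
    ultimately show ?thesis unfolding f_def[abs_def] by (rule borel_measurable_times)
  qed
  have fmL: "f i j \<in> borel_measurable lebesgue" for i j
    using measurable_completion[OF fm[of i j, folded measurable_lborel2]] by simp
  have ef: "AE x in lborel. e i j x = f i j x" for i j
    using Gae[of "(i,j)"]
  proof eventually_elim
    case (elim x)
    show ?case
    proof (cases "x \<in> cball 0 R")
      case True then show ?thesis using elim by (simp add: f_def)
    next
      case False
      then have "x \<notin> \<Omega>" using R by auto
      then show ?thesis using False by (simp add: f_def e_def)
    qed
  qed
  have efL: "AE x in lebesgue. e i j x = f i j x" for i j by (rule AE_completion[OF ef])
  have f0: "x \<notin> cball 0 R \<Longrightarrow> f i j x = 0" for i j x by (simp add: f_def)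
  have \<Omega>L: "\<Omega> \<in> lmeasurable" using lmeasurable_open[OF \<Omega>b \<Omega>o] .
  have i\<Omega>: "integrable lebesgue (indicator \<Omega> :: real^2 \<Rightarrow> real)"
    using \<Omega>L by (intro integrable_real_indicator) (auto simp: fmeasurable_def)
  have isq: "integrable lebesgue (\<lambda>x. indicator \<Omega> x * (\<sigma> x $ i $ j)^2)" for i j
    using sq[of i j] unfolding set_integrable_def by simp
  have eint: "integrable lebesgue (e i j)" for i j
  proof (rule Bochner_Integration.integrable_bound)
    show "integrable lebesgue (\<lambda>x. indicator \<Omega> x + indicator \<Omega> x * (\<sigma> x $ i $ j)^2 :: real)"
      using i\<Omega> isq[of i j] by simp
    show "e i j \<in> borel_measurable lebesgue" by (rule em)
    have "\<bar>a\<bar> \<le> 1 + a^2" for a :: real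
    proof -
      have "\<bar>a * 1\<bar> \<le> a^2 + 1^2" by (rule abs_prod_le_sq)
      then show ?thesis by simp
    qed
    then show "AE x in lebesgue. norm (e i j x) \<le> norm (indicator \<Omega> x + indicator \<Omega> x * (\<sigma> x $ i $ j)^2 :: real)"
      by (intro AE_I2) (auto simp: e_def indicator_def)
  qed
  have fint: "integrable lborel (f i j)" for i j
  proof -
    have "integrable lebesgue (f i j)"
      using integrable_cong_AE[OF em fmL efL] eint by simp
    then show ?thesis using integrable_completion[of "f i j" lborel] fm by simp
  qed
  have fL2: "L2 (f i j)" for i j
  proof -
    have "(\<lambda>x. (e i j x)^2) = (\<lambda>x. indicator \<Omega> x * (\<sigma> x $ i $ j)^2)"
      by (auto simp: e_def indicator_def fun_eq_iff)
    then have "integrable lebesgue (\<lambda>x. (e i j x)^2)"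
      using isq[of i j] by simp
    moreover have "AE x in lebesgue. (e i j x)^2 = (f i j x)^2" using efL[of i j] by eventually_elim simp
    moreover have "(\<lambda>x. (f i j x)^2) \<in> borel_measurable lebesgue" using fmL[of i j] by measurable
    moreover have "(\<lambda>x. (e i j x)^2) \<in> borel_measurable lebesgue" by measurable
    ultimately have "integrable lebesgue (\<lambda>x. (f i j x)^2)"
      using integrable_cong_AE by blast
    moreover have "(\<lambda>x. (f i j x)^2) \<in> borel_measurable lborel" using fm[of i j] by measurable
    ultimately have "integrable lborel (\<lambda>x. (f i j x)^2)"
      using integrable_completion by blast
    then show ?thesis using fm by (simp add: L2_def)
  qed
  have fweak: "(\<integral>x. (\<Sum>i\<in>UNIV. \<Sum>j\<in>UNIV. f i j x * (Dv x (axis j 1) $ i)) \<partial>lborel) = 0"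
    if C1: "C1_field v Dv" for v Dv
  proof -
    have Dc: "continuous_on UNIV (\<lambda>x. Dv x (axis j 1) $ i)" for i j
      using C1 unfolding C1_field_def by auto
    have Dm: "(\<lambda>x. Dv x (axis j 1) $ i) \<in> borel_measurable borel" for i j
      by (rule borel_measurable_continuous_onI[OF Dc])
    have DmL: "(\<lambda>x. Dv x (axis j 1) $ i) \<in> borel_measurable lebesgue" for i j
      using measurable_completion[OF Dm[of j i, folded measurable_lborel2]] by simp
    define D where "D i j x = Dv x (axis j 1) $ i" for i j x
    have "0 = (LINT x:\<Omega>|lebesgue. (\<Sum>i\<in>UNIV. \<Sum>j\<in>UNIV. \<sigma> x $ i $ j * (Dv x (axis j 1) $ i)))"
      using weak[OF C1] by simp
    also have "\<dots> = (\<integral>x. (\<Sum>i\<in>UNIV. \<Sum>j\<in>UNIV. e i j x * D i j x) \<partial>lebesgue)"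
      unfolding set_lebesgue_integral_def e_def D_def
      by (simp add: sum_distrib_left algebra_simps)
    also have "\<dots> = (\<integral>x. (\<Sum>i\<in>UNIV. \<Sum>j\<in>UNIV. f i j x * D i j x) \<partial>lebesgue)"
    proof (rule integral_cong_AE)
      show "(\<lambda>x. \<Sum>i\<in>UNIV. \<Sum>j\<in>UNIV. e i j x * D i j x) \<in> borel_measurable lebesgue"
        unfolding D_def using DmL by (simp add: sum_2) measurable
      show "(\<lambda>x. \<Sum>i\<in>UNIV. \<Sum>j\<in>UNIV. f i j x * D i j x) \<in> borel_measurable lebesgue"
        unfolding D_def using DmL fmL by (simp add: sum_2) measurable
      show "AE x in lebesgue. (\<Sum>i\<in>UNIV. \<Sum>j\<in>UNIV. e i j x * D i j x) = (\<Sum>i\<in>UNIV. \<Sum>j\<in>UNIV. f i j x * D i j x)"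
        using AE_all_2[where P="\<lambda>i j x. e i j x = f i j x", OF efL] by eventually_elim simp
    qed
    also have "\<dots> = (\<integral>x. (\<Sum>i\<in>UNIV. \<Sum>j\<in>UNIV. f i j x * D i j x) \<partial>lborel)"
    proof (rule integral_completion)
      show "(\<lambda>x. \<Sum>i\<in>UNIV. \<Sum>j\<in>UNIV. f i j x * D i j x) \<in> borel_measurable lborel"
        unfolding D_def using Dm fm by (simp add: sum_2) measurable
    qed
    finally show ?thesis unfolding D_def by simp
  qed
  show ?thesis
  proof (rule that)
    show "\<And>i j. f i j \<in> borel_measurable borel" by (rule fm)
    show "\<And>i j. AE x in lborel. indicator \<Omega> x * \<sigma> x $ i $ j = f i j x" using ef unfolding e_def .
    show "\<And>i j x. x \<notin> cball 0 R \<Longrightarrow> f i j x = 0" by (rule f0)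
    show "\<And>i j. integrable lborel (f i j)" by (rule fint)
    show "\<And>i j. L2 (f i j)" by (rule fL2)
    show "\<And>v Dv. C1_field v Dv \<Longrightarrow>
       (\<integral>x. (\<Sum>i\<in>UNIV. \<Sum>j\<in>UNIV. f i j x * (Dv x (axis j 1) $ i)) \<partial>lborel) = 0" by (rule fweak)
  qed
qed

lemma Z_zero:
  fixes f g :: "2 \<Rightarrow> 2 \<Rightarrow> real^2 \<Rightarrow> real"
  assumes Wf: "\<And>v Dv. C1_field v Dv \<Longrightarrow>
      (\<integral>x. (\<Sum>i\<in>UNIV. \<Sum>j\<in>UNIV. f i j x * (Dv x (axis j 1) $ i)) \<partial>lborel) = 0"
    and Wg: "\<And>v Dv. C1_field v Dv \<Longrightarrow>
      (\<integral>x. (\<Sum>i\<in>UNIV. \<Sum>j\<in>UNIV. g i j x * (Dv x (axis j 1) $ i)) \<partial>lborel) = 0"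
    and fm: "\<And>i j. f i j \<in> borel_measurable borel" and gm: "\<And>i j. g i j \<in> borel_measurable borel"
    and fi: "\<And>i j. integrable lborel (f i j)" and gi: "\<And>i j. integrable lborel (g i j)"
    and fL: "\<And>i j. L2 (f i j)" and gL: "\<And>i j. L2 (g i j)"
    and g0: "\<And>i j x. x \<notin> cball 0 R \<Longrightarrow> g i j x = 0"
  shows "(\<integral>x. f 1 1 x * g 2 2 x \<partial>lborel) + (\<integral>x. f 2 2 x * g 1 1 x \<partial>lborel)
       - (\<integral>x. f 1 2 x * g 2 1 x \<partial>lborel) - (\<integral>x. f 2 1 x * g 1 2 x \<partial>lborel) = 0"
proof -
  define I where "I p q = (\<integral>x. p x * q x \<partial>lborel)" for p q :: "real^2 \<Rightarrow> real"
  define Z where "Z = I (f 1 1) (g 2 2) + I (f 2 2) (g 1 1) - I (f 1 2) (g 2 1) - I (f 2 1) (g 1 2)"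
  have bS: "bounded (cball (0::real^2) R)" by simp
  have Zb: "\<bar>Z\<bar> \<le> 4 * \<epsilon>" if e: "\<epsilon> > 0" for \<epsilon>
  proof -
    have tc: "\<exists>\<delta>>0. \<forall>h. norm h < \<delta> \<longrightarrow>
       \<bar>(\<integral>x. f a b x * g c d (x - h) \<partial>lborel) - (\<integral>x. f a b x * g c d x \<partial>lborel)\<bar> < \<epsilon>" for a b c d
      by (rule transl_cont[OF fL gL g0 bS e])
    obtain \<delta>1 where d1: "\<delta>1 > 0" "\<And>h. norm h < \<delta>1 \<Longrightarrow>
       \<bar>(\<integral>x. f 1 1 x * g 2 2 (x - h) \<partial>lborel) - (\<integral>x. f 1 1 x * g 2 2 x \<partial>lborel)\<bar> < \<epsilon>"
      using tc[of 1 1 2 2] by blast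
    obtain \<delta>2 where d2: "\<delta>2 > 0" "\<And>h. norm h < \<delta>2 \<Longrightarrow>
       \<bar>(\<integral>x. f 2 2 x * g 1 1 (x - h) \<partial>lborel) - (\<integral>x. f 2 2 x * g 1 1 x \<partial>lborel)\<bar> < \<epsilon>"
      using tc[of 2 2 1 1] by blast
    obtain \<delta>3 where d3: "\<delta>3 > 0" "\<And>h. norm h < \<delta>3 \<Longrightarrow>
       \<bar>(\<integral>x. f 1 2 x * g 2 1 (x - h) \<partial>lborel) - (\<integral>x. f 1 2 x * g 2 1 x \<partial>lborel)\<bar> < \<epsilon>"
      using tc[of 1 2 2 1] by blast
    obtain \<delta>4 where d4: "\<delta>4 > 0" "\<And>h. norm h < \<delta>4 \<Longrightarrow>
       \<bar>(\<integral>x. f 2 1 x * g 1 2 (x - h) \<partial>lborel) - (\<integral>x. f 2 1 x * g 1 2 x \<partial>lborel)\<bar> < \<epsilon>"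
      using tc[of 2 1 1 2] by blast
    define \<delta> where "\<delta> = min (min \<delta>1 \<delta>2) (min \<delta>3 \<delta>4)"
    have \<delta>0: "\<delta> > 0" unfolding \<delta>_def using d1 d2 d3 d4 by simp
    define l where "l = \<delta> / 6"
    have l: "l > 0" unfolding l_def using \<delta>0 by simp
    have sup: "norm h < \<delta>1" "norm h < \<delta>2" "norm h < \<delta>3" "norm h < \<delta>4" if "rhol l h \<noteq> 0" for h
      using rhol_supp[OF l that] unfolding l_def \<delta>_def by auto
    define C where "C = (\<integral>z. rhol l z \<partial>lborel)"
    have C0: "C > 0" unfolding C_def by (rule rhol_pos[OF l])
    have rM: "rhol l z \<le> 216 * 216" for z using rhol_bound[of l z] by simp
    note KE = kernel_estimate[OF _ _ _ _ rhol_meas[OF l] rhol_nonneg rM rhol_integrable[OF l], folded C_def]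
    have e1: "\<bar>Jint (f 1 1) (g 2 2) (rhol l) - C * I (f 1 1) (g 2 2)\<bar> \<le> C * \<epsilon>"
      unfolding Jint_def I_def using d1(2) sup(1) by (intro KE[OF fL gL fi gi]) (auto intro: less_imp_le)
    have e2: "\<bar>Jint (f 2 2) (g 1 1) (rhol l) - C * I (f 2 2) (g 1 1)\<bar> \<le> C * \<epsilon>"
      unfolding Jint_def I_def using d2(2) sup(2) by (intro KE[OF fL gL fi gi]) (auto intro: less_imp_le)
    have e3: "\<bar>Jint (f 1 2) (g 2 1) (rhol l) - C * I (f 1 2) (g 2 1)\<bar> \<le> C * \<epsilon>"
      unfolding Jint_def I_def using d3(2) sup(3) by (intro KE[OF fL gL fi gi]) (auto intro: less_imp_le)
    have e4: "\<bar>Jint (f 2 1) (g 1 2) (rhol l) - C * I (f 2 1) (g 1 2)\<bar> \<le> C * \<epsilon>"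
      unfolding Jint_def I_def using d4(2) sup(4) by (intro KE[OF fL gL fi gi]) (auto intro: less_imp_le)
    note ci = core_identity[OF Wf Wg fm gm fi gi l]
    have "C * Z = (C * I (f 1 1) (g 2 2) - Jint (f 1 1) (g 2 2) (rhol l))
                + (C * I (f 2 2) (g 1 1) - Jint (f 2 2) (g 1 1) (rhol l))
                - (C * I (f 1 2) (g 2 1) - Jint (f 1 2) (g 2 1) (rhol l))
                - (C * I (f 2 1) (g 1 2) - Jint (f 2 1) (g 1 2) (rhol l))"
      unfolding Z_def using ci by (simp add: algebra_simps)
    then have "\<bar>C * Z\<bar> \<le> 4 * (C * \<epsilon>)" using e1 e2 e3 e4 unfolding abs_le_iff by linarith
    then have "C * \<bar>Z\<bar> \<le> C * (4 * \<epsilon>)" using C0 by (simp add: abs_mult)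
    then show ?thesis using C0 by simp
  qed
  have "Z = 0"
  proof (rule ccontr)
    assume "Z \<noteq> 0"
    then have "\<bar>Z\<bar> / 8 > 0" by simp
    from Zb[OF this] show False using \<open>Z \<noteq> 0\<close> by simp
  qed
  then show ?thesis unfolding Z_def I_def .
qed

theorem theorem3:
  fixes \<Omega> :: "(real^2) set" and \<sigma>1 \<sigma>2 :: "real^2 \<Rightarrow> real^2^2"
  assumes "open \<Omega>" and "bounded \<Omega>"
    and "residual_stress \<Omega> \<sigma>1" and "residual_stress \<Omega> \<sigma>2"
  shows "(LINT x:\<Omega>|lebesgue. full_contraction (\<sigma>1 x) (\<sigma>2 x))
       = (LINT x:\<Omega>|lebesgue. planar_trace (\<sigma>1 x) * planar_trace (\<sigma>2 x))"
proof -
  obtain R where R: "\<Omega> \<subseteq> cball 0 R"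
    using assms(2) unfolding bounded_pos by (auto simp: subset_eq)
  obtain f where fm: "\<And>i j. f i j \<in> borel_measurable borel"
    and fae: "\<And>i j. AE x in lborel. indicator \<Omega> x * \<sigma>1 x $ i $ j = f i j x"
    and f0: "\<And>i j x. x \<notin> cball 0 R \<Longrightarrow> f i j x = 0"
    and fi: "\<And>i j. integrable lborel (f i j)" and fL: "\<And>i j. L2 (f i j)"
    and fw: "\<And>v Dv. C1_field v Dv \<Longrightarrow>
       (\<integral>x. (\<Sum>i\<in>UNIV. \<Sum>j\<in>UNIV. f i j x * (Dv x (axis j 1) $ i)) \<partial>lborel) = 0"
    using residual_conv[OF assms(3) assms(1) assms(2) R] by blast
  obtain g where gm: "\<And>i j. g i j \<in> borel_measurable borel"
    and gae: "\<And>i j. AE x in lborel. indicator \<Omega> x * \<sigma>2 x $ i $ j = g i j x"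
    and g0: "\<And>i j x. x \<notin> cball 0 R \<Longrightarrow> g i j x = 0"
    and gi: "\<And>i j. integrable lborel (g i j)" and gL: "\<And>i j. L2 (g i j)"
    and gw: "\<And>v Dv. C1_field v Dv \<Longrightarrow>
       (\<integral>x. (\<Sum>i\<in>UNIV. \<Sum>j\<in>UNIV. g i j x * (Dv x (axis j 1) $ i)) \<partial>lborel) = 0"
    using residual_conv[OF assms(4) assms(1) assms(2) R] by blast
  have Z: "(\<integral>x. f 1 1 x * g 2 2 x \<partial>lborel) + (\<integral>x. f 2 2 x * g 1 1 x \<partial>lborel)
       - (\<integral>x. f 1 2 x * g 2 1 x \<partial>lborel) - (\<integral>x. f 2 1 x * g 1 2 x \<partial>lborel) = 0"
    by (rule Z_zero[OF fw gw fm gm fi gi fL gL g0])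
  define e1 where "e1 i j x = indicator \<Omega> x * \<sigma>1 x $ i $ j" for i j x
  define e2 where "e2 i j x = indicator \<Omega> x * \<sigma>2 x $ i $ j" for i j x
  have e1m[measurable]: "e1 i j \<in> borel_measurable lebesgue" for i j
    using assms(3) unfolding residual_stress_def set_borel_measurable_def e1_def[abs_def] by simp
  have e2m[measurable]: "e2 i j \<in> borel_measurable lebesgue" for i j
    using assms(4) unfolding residual_stress_def set_borel_measurable_def e2_def[abs_def] by simp
  have fmL[measurable]: "f i j \<in> borel_measurable lebesgue" for i j
    using measurable_completion[OF fm[of i j, folded measurable_lborel2]] by simp
  have gmL[measurable]: "g i j \<in> borel_measurable lebesgue" for i j
    using measurable_completion[OF gm[of i j, folded measurable_lborel2]] by simp
  have fmB[measurable]: "f i j \<in> borel_measurable lborel" for i j using fm by simp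
  have gmB[measurable]: "g i j \<in> borel_measurable lborel" for i j using gm by simp
  have AEfg: "AE x in lebesgue. (\<forall>i j. e1 i j x = f i j x) \<and> (\<forall>i j. e2 i j x = g i j x)"
  proof -
    have "AE x in lborel. \<forall>i j. e1 i j x = f i j x"
      using AE_all_2[where P="\<lambda>i j x. e1 i j x = f i j x", OF fae[unfolded e1_def[symmetric]]] .
    moreover have "AE x in lborel. \<forall>i j. e2 i j x = g i j x"
      using AE_all_2[where P="\<lambda>i j x. e2 i j x = g i j x", OF gae[unfolded e2_def[symmetric]]] .
    ultimately show ?thesis by (intro AE_completion) (rule AE_conjI)
  qed
  define I where "I p q = (\<integral>x. p x * q x \<partial>lborel)" for p q :: "real^2 \<Rightarrow> real"
  have Iint: "integrable lborel (\<lambda>x. f a b x * g c d x)" for a b c d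
    by (rule L2_prod_integrable[OF fL gL])
  have LHS: "(LINT x:\<Omega>|lebesgue. full_contraction (\<sigma>1 x) (\<sigma>2 x))
      = I (f 1 1) (g 1 1) + I (f 1 2) (g 1 2) + I (f 2 1) (g 2 1) + I (f 2 2) (g 2 2)"
  proof -
    have "(LINT x:\<Omega>|lebesgue. full_contraction (\<sigma>1 x) (\<sigma>2 x))
       = (\<integral>x. e1 1 1 x * e2 1 1 x + e1 1 2 x * e2 1 2 x + e1 2 1 x * e2 2 1 x + e1 2 2 x * e2 2 2 x \<partial>lebesgue)"
      unfolding set_lebesgue_integral_def
      by (intro Bochner_Integration.integral_cong refl)
         (auto simp: e1_def e2_def full_contraction_def sum_2 indicator_def)
    also have "\<dots> = (\<integral>x. f 1 1 x * g 1 1 x + f 1 2 x * g 1 2 x + f 2 1 x * g 2 1 x + f 2 2 x * g 2 2 x \<partial>lebesgue)"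
      by (rule integral_cong_AE) (measurable, use AEfg in \<open>eventually_elim, simp\<close>)
    also have "\<dots> = (\<integral>x. f 1 1 x * g 1 1 x + f 1 2 x * g 1 2 x + f 2 1 x * g 2 1 x + f 2 2 x * g 2 2 x \<partial>lborel)"
      by (rule integral_completion) measurable
    also have "\<dots> = I (f 1 1) (g 1 1) + I (f 1 2) (g 1 2) + I (f 2 1) (g 2 1) + I (f 2 2) (g 2 2)"
      unfolding I_def using Iint by simp
    finally show ?thesis .
  qed
  have RHS: "(LINT x:\<Omega>|lebesgue. planar_trace (\<sigma>1 x) * planar_trace (\<sigma>2 x))
      = I (f 1 1) (g 1 1) + I (f 1 1) (g 2 2) + I (f 2 2) (g 1 1) + I (f 2 2) (g 2 2)"
  proof -
    have "(LINT x:\<Omega>|lebesgue. planar_trace (\<sigma>1 x) * planar_trace (\<sigma>2 x))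
       = (\<integral>x. e1 1 1 x * e2 1 1 x + e1 1 1 x * e2 2 2 x + e1 2 2 x * e2 1 1 x + e1 2 2 x * e2 2 2 x \<partial>lebesgue)"
      unfolding set_lebesgue_integral_def
      by (intro Bochner_Integration.integral_cong refl)
         (auto simp: e1_def e2_def planar_trace_def sum_2 indicator_def algebra_simps)
    also have "\<dots> = (\<integral>x. f 1 1 x * g 1 1 x + f 1 1 x * g 2 2 x + f 2 2 x * g 1 1 x + f 2 2 x * g 2 2 x \<partial>lebesgue)"
      by (rule integral_cong_AE) (measurable, use AEfg in \<open>eventually_elim, simp\<close>)
    also have "\<dots> = (\<integral>x. f 1 1 x * g 1 1 x + f 1 1 x * g 2 2 x + f 2 2 x * g 1 1 x + f 2 2 x * g 2 2 x \<partial>lborel)"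
      by (rule integral_completion) measurable
    also have "\<dots> = I (f 1 1) (g 1 1) + I (f 1 1) (g 2 2) + I (f 2 2) (g 1 1) + I (f 2 2) (g 2 2)"
      unfolding I_def using Iint by simp
    finally show ?thesis .
  qed
  have gsym: "AE x in lborel. g 1 2 x = g 2 1 x"
  proof -
    have symm: "\<sigma>2 x $ 1 $ 2 = \<sigma>2 x $ 2 $ 1" if "x \<in> \<Omega>" for x
    proof -
      have "transpose (\<sigma>2 x) = \<sigma>2 x" using assms(4) that unfolding residual_stress_def by auto
      then have "(transpose (\<sigma>2 x)) $ 1 $ 2 = \<sigma>2 x $ 1 $ 2" by simp
      then show ?thesis by (simp add: transpose_def)
    qed
    show ?thesis using gae[of 1 2] gae[of 2 1]
    proof eventually_elim
      case (elim x)
      then show ?case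
      proof (cases "x \<in> \<Omega>")
        case True then show ?thesis using elim symm[OF True] by simp
      next
        case False then show ?thesis using elim by simp
      qed
    qed
  qed
  have S1: "I (f 1 2) (g 1 2) = I (f 1 2) (g 2 1)"
    unfolding I_def
  proof (rule integral_cong_AE)
    show "(\<lambda>x. f 1 2 x * g 1 2 x) \<in> borel_measurable lborel" by measurable
    show "(\<lambda>x. f 1 2 x * g 2 1 x) \<in> borel_measurable lborel" by measurable
    show "AE x in lborel. f 1 2 x * g 1 2 x = f 1 2 x * g 2 1 x" using gsym by eventually_elim simp
  qed
  have S2: "I (f 2 1) (g 2 1) = I (f 2 1) (g 1 2)"
    unfolding I_def
  proof (rule integral_cong_AE)
    show "(\<lambda>x. f 2 1 x * g 2 1 x) \<in> borel_measurable lborel" by measurable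
    show "(\<lambda>x. f 2 1 x * g 1 2 x) \<in> borel_measurable lborel" by measurable
    show "AE x in lborel. f 2 1 x * g 2 1 x = f 2 1 x * g 1 2 x" using gsym by eventually_elim simp
  qed
  show ?thesis unfolding LHS RHS using Z S1 S2 unfolding I_def by simp
qed


end
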